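(* Let $0\le\eta<1$, $m\in\mathbb{N}$, $n\in\mathbb{N}_0$, $m>n$. If $f_{m,j}\in\overline{S}H(m,n,\eta)$ for $j=1,2,\dots$, with $f_{m,j}(z)=z-\sum_{k=2}^{\infty}|a_{k,j}|z^k+(-1)^{m-1}\sum_{k=1}^{\infty}|b_{k,j}|\overline{z}^k$, and $t_j\ge0$ with $\sum_{j=1}^{\infty}t_j=1$, then $\sum_{j=1}^{\infty}t_jf_{m,j}\in\overline{S}H(m,n,\eta)$. That is, $\overline{S}H(m,n,\eta)$ is closed under convex combination.
   Context: Fix real parameters $\alpha,\beta,\gamma,\delta>0$ and $p,q>0$ with $q\le \alpha+p$. For an integer $m\ge 0$ define $C_1(m)=1$ and, for $k\ge 2$, $$C_k(m)=\frac{(m+1)_{k-1}}{(k-1)!}\cdot\frac{\Gamma(\gamma+q(k-1))/\Gamma(\gamma)}{\Gamma(\beta+\alpha(k-1))\,\Gamma(\delta+p(k-1))/\Gamma(\delta)},$$ where $(x)_j=\Gamma(x+j)/\Gamma(x)$. For analytic $\varphi(z)=\sum_{k\ge1}c_kz^k$ on $U=\{|z|<1\}$ set $\Phi^m\varphi(z)=\sum_{k\ge1}C_k(m)c_kz^k$, and for harmonic $f=h+\overline{g}$ set $\Phi^m f=\Phi^m h+(-1)^m\overline{\Phi^m g}$. The class $SH(m,n,\eta)$ consists of harmonic $f=h+\overline g$, univalent and sense-preserving in $U$, with $h(z)=z+\sum_{k\ge2}a_kz^k$, $g(z)=\sum_{k\ge1}b_kz^k$, $|b_1|<1$, and $\operatorname{Re}\bigl(\Phi^m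 f/\Phi^n f\bigr)>\eta$ in $U$. The class $\overline{S}H(m,n,\eta)$ consists of those $f_m=h+\overline{g_m}\in SH(m,n,\eta)$ with $h(z)=z-\sum_{k\ge2}a_kz^k$, $g_m(z)=(-1)^{m-1}\sum_{k\ge1}b_kz^k$, $a_k,b_k\ge0$. *)

theory Defs
  imports "HOL-Analysis.Analysis"
begin

definition U :: "complex set" where "U = ball 0 1"

definition Ccoef :: "real \<Rightarrow> real \<Rightarrow> real \<Rightarrow> real \<Rightarrow> real \<Rightarrow> real \<Rightarrow> nat \<Rightarrow> nat \<Rightarrow> real" where
  "Ccoef al be ga de p q m k =
     (if k \<le> 1 then 1
      else pochhammer (real m + 1) (k - 1) / fact (k - 1) *
           ((Gamma (ga + q * real (k - 1)) / Gamma ga) /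
            (Gamma (be + al * real (k - 1)) * Gamma (de + p * real (k - 1)) / Gamma de)))"

definition ps :: "(nat \<Rightarrow> complex) \<Rightarrow> complex \<Rightarrow> complex" where
  "ps c z = (\<Sum>k. c k * z ^ k)"

definition Phi_ps :: "real \<Rightarrow> real \<Rightarrow> real \<Rightarrow> real \<Rightarrow> real \<Rightarrow> real \<Rightarrow> nat \<Rightarrow> (nat \<Rightarrow> complex) \<Rightarrow> complex \<Rightarrow> complex" where
  "Phi_ps al be ga de p q m c z = (\<Sum>k. complex_of_real (Ccoef al be ga de p q m k) * c k * z ^ k)"

definition Phi_harm :: "real \<Rightarrow> real \<Rightarrow> real \<Rightarrow> real \<Rightarrow> real \<Rightarrow> real \<Rightarrow> nat \<Rightarrow> (nat \<Rightarrow> complex) \<Rightarrow> (nat \<Rightarrow> complex) \<Rightarrow> complex \<Rightarrow> complex" where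
  "Phi_harm al be ga de p q m a b z =
     Phi_ps al be ga de p q m a z + (-1) ^ m * cnj (Phi_ps al be ga de p q m b z)"

definition SH :: "real \<Rightarrow> real \<Rightarrow> real \<Rightarrow> real \<Rightarrow> real \<Rightarrow> real \<Rightarrow> nat \<Rightarrow> nat \<Rightarrow> real \<Rightarrow> (complex \<Rightarrow> complex) \<Rightarrow> bool" where
  "SH al be ga de p q m n eta f \<longleftrightarrow>
     (\<exists>a b :: nat \<Rightarrow> complex.
        a 0 = 0 \<and> a 1 = 1 \<and> b 0 = 0 \<and> cmod (b 1) < 1 \<and>
        (\<forall>z\<in>U. summable (\<lambda>k. a k * z ^ k) \<and> summable (\<lambda>k. b k * z ^ k) \<and>
           (\<forall>r\<in>{m, n}. summable (\<lambda>k. complex_of_real (Ccoef al be ga de p q r k) * a k * z ^ k) \<and>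
                        summable (\<lambda>k. complex_of_real (Ccoef al be ga de p q r k) * b k * z ^ k))) \<and>
        (\<forall>z\<in>U. f z = ps a z + cnj (ps b z)) \<and>
        inj_on f U \<and>
        (\<forall>z\<in>U. cmod (deriv (ps b) z) < cmod (deriv (ps a) z)) \<and>
        (\<forall>z\<in>U - {0}. Re (Phi_harm al be ga de p q m a b z / Phi_harm al be ga de p q n a b z) > eta))"

definition SHbar :: "real \<Rightarrow> real \<Rightarrow> real \<Rightarrow> real \<Rightarrow> real \<Rightarrow> real \<Rightarrow> nat \<Rightarrow> nat \<Rightarrow> real \<Rightarrow> (complex \<Rightarrow> complex) \<Rightarrow> bool" where
  "SHbar al be ga de p q m n eta f \<longleftrightarrow>
     SH al be ga de p q m n eta f \<and>
     (\<exists>A B :: nat \<Rightarrow> real. (\<forall>k. A k \<ge> 0 \<and> B k \<ge> 0) \<and>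
        (\<forall>z\<in>U. f z = z - (\<Sum>k. complex_of_real (A (k + 2)) * z ^ (k + 2))
                     + cnj ((-1) ^ (m - 1) * (\<Sum>k. complex_of_real (B (k + 1)) * z ^ (k + 1)))))"

end

theory Submission
  imports Defs
begin

lemma Gsum:
  fixes w :: "nat \<Rightarrow> real"
  assumes nn: "\<And>k. w k \<ge> 0" and sw: "summable w" and w0: "w 0 = 0"
    and le: "suminf w \<le> M" and w1: "w 1 < M" and r0: "0 \<le> \<rho>" and r1: "\<rho> < 1"
  shows "summable (\<lambda>k. w (Suc k) * \<rho>^k) \<and> (\<Sum>k. w (Suc k) * \<rho>^k) < M"
proof -
  define g where "g k = \<rho> * w (Suc k) + (if k = 0 then (1-\<rho>) * w 1 else 0)" for k
  have sws: "summable (\<lambda>k. w (Suc k))" using sw by (simp add: summable_Suc_iff)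
  have sg: "summable g" unfolding g_def
    by (intro summable_add summable_mult sws summable_finite[of "{0}"]) auto
  have bnd: "norm (w (Suc k) * \<rho>^k) \<le> g k" for k
  proof (cases k)
    case 0 then show ?thesis using nn[of 1] by (simp add: g_def algebra_simps)
  next
    case (Suc j)
    have "\<rho>^j \<le> 1" using r0 r1 by (simp add: power_le_one)
    then have "\<rho>^k \<le> \<rho>" using r0 Suc by (simp add: mult_left_le)
    then have "w (Suc k) * \<rho>^k \<le> w (Suc k) * \<rho>" using nn[of "Suc k"] by (rule mult_left_mono)
    then show ?thesis using nn[of "Suc k"] r0 Suc by (simp add: g_def abs_mult mult.commute)
  qed
  have st: "summable (\<lambda>k. w (Suc k) * \<rho>^k)"
    by (rule summable_comparison_test[OF _ sg]) (use bnd in auto)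
  have "(\<Sum>k. w (Suc k) * \<rho>^k) \<le> suminf g"
    by (rule suminf_le[OF _ st sg]) (use bnd in \<open>auto intro: order_trans[OF abs_ge_self]\<close>)
  also have "suminf g = \<rho> * (\<Sum>k. w (Suc k)) + (1-\<rho>) * w 1"
  proof -
    have "suminf g = (\<Sum>k. \<rho> * w (Suc k)) + (\<Sum>k. (if k = 0 then (1-\<rho>) * w 1 else 0))"
      unfolding g_def by (intro suminf_add[symmetric] summable_mult sws summable_finite[of "{0}"]) auto
    also have "(\<Sum>k. (if k = 0 then (1-\<rho>) * w 1 else 0)) = (1-\<rho>) * w 1"
      by (subst suminf_finite[of "{0}"]) auto
    finally show ?thesis by (simp add: suminf_mult sws)
  qed
  also have "(\<Sum>k. w (Suc k)) = suminf w" using suminf_split_head[OF sw] w0 by simp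
  also have "\<rho> * suminf w + (1 - \<rho>) * w 1 < M"
  proof -
    have "\<rho> * suminf w \<le> \<rho> * M" using le r0 by (simp add: mult_left_mono)
    moreover have "(1-\<rho>) * w 1 < (1-\<rho>) * M" using w1 r1 by simp
    ultimately show ?thesis by (simp add: algebra_simps)
  qed
  finally show ?thesis using st by simp
qed

lemma G2:
  fixes w :: "nat \<Rightarrow> real"
  assumes nn: "\<And>k. w k \<ge> 0" and w0: "w 0 = 0"
    and h: "\<And>r. 0 < r \<Longrightarrow> r < 1 \<Longrightarrow> summable (\<lambda>k. w (Suc k) * r^k) \<and> (\<Sum>k. w (Suc k) * r^k) < M"
  shows "summable w \<and> suminf w \<le> M \<and> w 1 < M"
proof -
  have part: "(\<Sum>k<K. w (Suc k)) \<le> M" for K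
  proof -
    have ev: "eventually (\<lambda>r. (\<Sum>k<K. w (Suc k) * r^k) \<le> M) (at_left (1::real))"
    proof -
      have "eventually (\<lambda>r. r \<in> {0<..<(1::real)}) (at_left 1)"
        by (rule eventually_at_left_real) simp
      then show ?thesis
      proof eventually_elim
        case (elim r)
        have "(\<Sum>k<K. w (Suc k) * r^k) \<le> (\<Sum>k. w (Suc k) * r^k)"
          using h[of r] elim nn by (intro sum_le_suminf) auto
        then show ?case using h[of r] elim by simp
      qed
    qed
    have lim: "((\<lambda>r. \<Sum>k<K. w (Suc k) * r^k) \<longlongrightarrow> (\<Sum>k<K. w (Suc k) * 1^k)) (at_left (1::real))"
      by (intro tendsto_intros)
    have "(\<Sum>k<K. w (Suc k) * 1^k) \<le> M"
      by (rule tendsto_upperbound[OF lim ev]) simp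
    then show ?thesis by simp
  qed
  have sws: "summable (\<lambda>k. w (Suc k))"
    by (rule summableI_nonneg_bounded[where x=M]) (use nn part in auto)
  have sw: "summable w" using sws by (simp add: summable_Suc_iff)
  have "suminf w = (\<Sum>k. w (Suc k))" using suminf_split_head[OF sw] w0 by simp
  also have "\<dots> \<le> M" by (rule suminf_le_const[OF sws part])
  finally have le: "suminf w \<le> M" .
  have "w 1 \<le> (\<Sum>k. w (Suc k) * (1/2)^k)"
    using sum_le_suminf[of "\<lambda>k. w (Suc k) * (1/2)^k" "{..<1}"] h[of "1/2"] nn by auto
  also have "\<dots> < M" using h[of "1/2"] by simp
  finally show ?thesis using sw le by simp
qed

lemma G1:
  fixes f :: "real \<Rightarrow> real"
  assumes cont: "\<And>r. 0 \<le> r \<Longrightarrow> r < 1 \<Longrightarrow> isCont f r" and f0: "f 0 > 0"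
    and nz: "\<And>r. 0 \<le> r \<Longrightarrow> r < 1 \<Longrightarrow> f r \<noteq> 0"
    and r: "0 \<le> r" "r < 1"
  shows "f r > 0"
proof (rule ccontr)
  assume "\<not> f r > 0"
  then have "f r \<le> 0" by simp
  then obtain x where "0 \<le> x" "x \<le> r" "f x = 0"
    using IVT2[of f r 0 0] f0 r cont by force
  then show False using nz[of x] r by simp
qed

lemma powcont:
  fixes c :: "nat \<Rightarrow> real"
  assumes "\<And>r. 0 \<le> r \<Longrightarrow> r < 1 \<Longrightarrow> summable (\<lambda>k. c k * r^k)" and "0 \<le> x" "x < 1"
  shows "isCont (\<lambda>r. \<Sum>k. c k * r^k) x"
  by (rule isCont_powser[of c "(x+1)/2"]) (use assms in auto)


lemma RPS_step:
  fixes c :: "nat \<Rightarrow> complex"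
  assumes \<rho>: "\<rho> > 0" and h: "\<And>r. 0 < r \<Longrightarrow> r < \<rho> \<Longrightarrow> (\<lambda>k. c k * of_real r ^ k) sums K"
  shows "c 0 = K \<and> (\<forall>r. 0 < r \<longrightarrow> r < \<rho> \<longrightarrow> (\<lambda>k. c (Suc k) * of_real r ^ k) sums 0)"
proof -
  have s2: "summable (\<lambda>k. c k * (of_real (\<rho>/2))^k)" using h[of "\<rho>/2"] \<rho> sums_summable by auto
  have ic: "isCont (\<lambda>\<zeta>. \<Sum>k. c k * \<zeta>^k) (of_real 0)"
    by (rule isCont_powser[OF s2]) (use \<rho> in simp)
  have ic2: "isCont (\<lambda>r. \<Sum>k. c k * (of_real r :: complex)^k) 0"
  proof -
    have "isCont (\<lambda>r::real. of_real r :: complex) 0" by (intro continuous_intros)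
    from isCont_o2[OF this ic] show ?thesis .
  qed
  then have "((\<lambda>r. \<Sum>k. c k * (of_real r :: complex)^k) \<longlongrightarrow> (\<Sum>k. c k * (of_real 0 :: complex)^k)) (at_right 0)"
    using continuous_at_imp_continuous_at_within continuous_within by blast
  then have lim: "((\<lambda>r. \<Sum>k. c k * (of_real r :: complex)^k) \<longlongrightarrow> c 0) (at_right 0)"
    by simp
  have ev: "eventually (\<lambda>r. (\<Sum>k. c k * (of_real r :: complex)^k) = K) (at_right 0)"
  proof -
    have "eventually (\<lambda>r. r \<in> {0<..<\<rho>}) (at_right (0::real))"
      by (rule eventually_at_right_real) (use \<rho> in simp)
    then show ?thesis
    proof eventually_elim
      case (elim r)
      then have "(\<lambda>k. c k * of_real r ^ k) sums K" using h by auto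
      then show ?case by (simp add: sums_iff)
    qed
  qed
  have limK: "((\<lambda>r. \<Sum>k. c k * (of_real r :: complex)^k) \<longlongrightarrow> K) (at_right 0)"
    using ev by (rule tendsto_eventually)
  have c0: "c 0 = K" by (rule tendsto_unique[OF _ lim limK]) simp
  have "(\<lambda>k. c (Suc k) * of_real r ^ k) sums 0" if r: "0 < r" "r < \<rho>" for r
  proof -
    have "(\<lambda>k. c k * of_real r ^ k) sums K" using h r by blast
    then have "(\<lambda>k. c (Suc k) * of_real r ^ (Suc k)) sums (K - c 0)"
      using sums_Suc_iff[of "\<lambda>k. c k * of_real r ^ k" "K - c 0"] by simp
    then have "(\<lambda>k. c (Suc k) * of_real r ^ (Suc k)) sums 0" using c0 by simp
    then have "(\<lambda>k. (1 / of_real r) * (c (Suc k) * of_real r ^ (Suc k))) sums ((1 / of_real r) * 0)"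
      by (rule sums_mult)
    moreover have "(\<lambda>k. (1 / of_real r) * (c (Suc k) * of_real r ^ (Suc k))) = (\<lambda>k. c (Suc k) * of_real r ^ k)"
      using r by (auto simp: field_simps)
    ultimately show ?thesis by simp
  qed
  then show ?thesis using c0 by blast
qed

lemma RPS_zero:
  fixes c :: "nat \<Rightarrow> complex"
  assumes \<rho>: "\<rho> > 0" and h: "\<And>r. 0 < r \<Longrightarrow> r < \<rho> \<Longrightarrow> (\<lambda>k. c k * of_real r ^ k) sums K"
    and k: "k \<ge> 1"
  shows "c k = 0"
proof -
  have I: "\<forall>r. 0 < r \<longrightarrow> r < \<rho> \<longrightarrow> (\<lambda>i. c (i + Suc j) * of_real r ^ i) sums 0" for j
  proof (induction j)
    case 0
    then show ?case using RPS_step[OF \<rho> h] by simp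
  next
    case (Suc j)
    have "\<forall>r. 0 < r \<longrightarrow> r < \<rho> \<longrightarrow> (\<lambda>i. c (Suc i + Suc j) * of_real r ^ i) sums 0"
      using RPS_step[of \<rho> "\<lambda>i. c (i + Suc j)" 0] \<rho> Suc.IH by blast
    then show ?case by simp
  qed
  obtain j where j: "k = Suc j" using k by (cases k) auto
  have "c (0 + Suc j) = 0"
    using RPS_step[of \<rho> "\<lambda>i. c (i + Suc j)" 0] \<rho> I[of j] by blast
  then show ?thesis using j by simp
qed


lemma junk_suminf: "\<not> summable X \<Longrightarrow> suminf X = (THE s. False)"
proof -
  assume "\<not> summable X"
  then have "(\<lambda>s. X sums s) = (\<lambda>s. False)" by (auto simp: summable_def)
  then show ?thesis unfolding suminf_def by simp
qed

lemma shift_sum: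
  fixes z :: complex and A :: "nat \<Rightarrow> real" and n :: nat
  defines "A0 \<equiv> (\<lambda>k. if k \<ge> n then A k else 0)"
  shows "summable (\<lambda>k. of_real (A (k+n)) * z^(k+n)) \<longleftrightarrow> summable (\<lambda>i. of_real (A0 i) * z^i)"
    and "summable (\<lambda>i. of_real (A0 i) * z^i) \<Longrightarrow> (\<Sum>k. of_real (A (k+n)) * z^(k+n)) = (\<Sum>i. of_real (A0 i) * z^i)"
proof -
  have e: "(\<lambda>k. of_real (A (k+n)) * z^(k+n)) = (\<lambda>k. (\<lambda>i. of_real (A0 i) * z^i) (k+n))"
    by (auto simp: A0_def)
  show "summable (\<lambda>k. of_real (A (k+n)) * z^(k+n)) \<longleftrightarrow> summable (\<lambda>i. of_real (A0 i) * z^i)"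
    unfolding e by (rule summable_iff_shift)
  assume s: "summable (\<lambda>i. of_real (A0 i) * z^i)"
  have z: "(\<Sum>i<n. of_real (A0 i) * z^i) = 0" by (auto simp: A0_def)
  have "(\<lambda>i. of_real (A0 i) * z^i) sums ((\<Sum>i. of_real (A0 i) * z^i) + 0)"
    using s summable_sums by simp
  then have "(\<lambda>k. (\<lambda>i. of_real (A0 i) * z^i) (k+n)) sums (\<Sum>i. of_real (A0 i) * z^i)"
    using sums_iff_shift[of "\<lambda>i. of_real (A0 i) * z^i" n] z by simp
  then show "(\<Sum>k. of_real (A (k+n)) * z^(k+n)) = (\<Sum>i. of_real (A0 i) * z^i)"
    unfolding e by (simp add: sums_iff)
qed

lemma good_radius:
  fixes A0 :: "nat \<Rightarrow> real"
  obtains \<rho> where "0 < \<rho>" "\<rho> \<le> 1"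
    "(\<exists>z0\<in>U-{0}. summable (\<lambda>i. of_real (A0 i) * z0^i)) \<Longrightarrow> (\<forall>z. norm z < \<rho> \<longrightarrow> summable (\<lambda>i. of_real (A0 i) * (z::complex)^i))"
proof (cases "\<exists>z0\<in>U-{0}. summable (\<lambda>i. of_real (A0 i) * z0^i)")
  case True
  then obtain z0 where z0: "z0 \<in> U - {0}" "summable (\<lambda>i. of_real (A0 i) * z0^i)" by blast
  have "norm z0 > 0" "norm z0 \<le> 1" using z0 by (auto simp: U_def)
  moreover have "\<forall>z. norm z < norm z0 \<longrightarrow> summable (\<lambda>i. of_real (A0 i) * (z::complex)^i)"
    using powser_inside[OF z0(2)] by blast
  ultimately show ?thesis using that by blast
next
  case False
  show ?thesis by (rule that[of 1]) (use False in auto)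
qed

lemma cis_k: "k \<ge> 1 \<Longrightarrow> cis (pi / (2 * real k)) ^ k = \<i>"
proof -
  assume k: "k \<ge> 1"
  have e: "real k * (pi / (2 * real k)) = pi/2" using k by (simp add: field_simps)
  have "cis (pi / (2 * real k)) ^ k = cis (real k * (pi / (2 * real k)))" by (rule Complex.DeMoivre)
  also have "\<dots> = \<i>" unfolding e by simp
  finally show ?thesis .
qed

lemma Link:
  fixes a b :: "nat \<Rightarrow> complex" and A B :: "nat \<Rightarrow> real" and \<sigma> :: complex
  assumes \<sigma>: "\<sigma> = 1 \<or> \<sigma> = -1"
    and a0: "a 0 = 0" and b0: "b 0 = 0"
    and sa: "\<And>z. z \<in> U \<Longrightarrow> summable (\<lambda>k. a k * z^k)"
    and sb: "\<And>z. z \<in> U \<Longrightarrow> summable (\<lambda>k. b k * z^k)"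
    and AB: "\<And>k. A k \<ge> 0 \<and> B k \<ge> 0"
    and eq: "\<And>z. z \<in> U \<Longrightarrow> ps a z + cnj (ps b z) = z - (\<Sum>k. complex_of_real (A (k + 2)) * z ^ (k + 2))
                     + cnj (\<sigma> * (\<Sum>k. complex_of_real (B (k + 1)) * z ^ (k + 1)))"
  shows "\<exists>Ah Bh. (\<forall>k. Ah k \<ge> 0 \<and> Bh k \<ge> 0) \<and> Ah 0 = 0 \<and> Ah 1 = 0 \<and> Bh 0 = 0 \<and>
            (\<forall>k. a k = of_real ((if k = 1 then 1 else 0) - Ah k)) \<and> (\<forall>k. b k = \<sigma> * of_real (Bh k))"
proof -
  define A0 where "A0 = (\<lambda>k. if k \<ge> 2 then A k else 0)"
  define B0 where "B0 = (\<lambda>k. if k \<ge> 1 then B k else 0)"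
  define SA where "SA z = (\<Sum>k. complex_of_real (A (k + 2)) * z ^ (k + 2))" for z
  define SB where "SB z = (\<Sum>k. complex_of_real (B (k + 1)) * z ^ (k + 1))" for z
  define u where "u = (THE s::complex. False)"
  define gA where "gA = (\<exists>z0\<in>U-{0}. summable (\<lambda>i. of_real (A0 i) * z0^i))"
  define gB where "gB = (\<exists>z0\<in>U-{0}. summable (\<lambda>i. of_real (B0 i) * z0^i))"
  obtain \<rho>A where \<rho>A: "0 < \<rho>A" "\<rho>A \<le> 1"
    "gA \<Longrightarrow> (\<forall>z. norm z < \<rho>A \<longrightarrow> summable (\<lambda>i. of_real (A0 i) * (z::complex)^i))"
    using good_radius[of A0] unfolding gA_def by blast
  obtain \<rho>B where \<rho>B: "0 < \<rho>B" "\<rho>B \<le> 1"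
    "gB \<Longrightarrow> (\<forall>z. norm z < \<rho>B \<longrightarrow> summable (\<lambda>i. of_real (B0 i) * (z::complex)^i))"
    using good_radius[of B0] unfolding gB_def by blast
  define \<rho> where "\<rho> = min \<rho>A \<rho>B"
  have \<rho>: "0 < \<rho>" "\<rho> \<le> 1" using \<rho>A \<rho>B by (auto simp: \<rho>_def)
  define A' where "A' = (\<lambda>k. if gA then A0 k else 0)"
  define B' where "B' = (\<lambda>k. if gB then B0 k else 0)"
  define cA where "cA = (if gA then 0 else u)"
  define cB where "cB = (if gB then 0 else u)"
  have SAeq: "(\<lambda>k. of_real (A' k) * z^k) sums (SA z - cA)" if z: "z \<noteq> 0" "norm z < \<rho>" for z
  proof (cases gA)
    case True
    have s: "summable (\<lambda>i. of_real (A0 i) * z^i)" using \<rho>A(3)[OF True] z by (auto simp: \<rho>_def)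
    have "SA z = (\<Sum>i. of_real (A0 i) * z^i)"
      unfolding SA_def using shift_sum(2)[where A=A and n=2 and z=z] s by (simp add: A0_def)
    then show ?thesis using s True by (simp add: A'_def cA_def summable_sums)
  next
    case False
    have zU: "z \<in> U - {0}" using z \<rho> by (auto simp: U_def)
    then have "\<not> summable (\<lambda>i. of_real (A0 i) * z^i)" using False gA_def by blast
    then have "\<not> summable (\<lambda>k. complex_of_real (A (k + 2)) * z ^ (k + 2))"
      using shift_sum(1)[where A=A and n=2 and z=z] by (simp add: A0_def)
    then have "SA z = u" unfolding SA_def u_def by (rule junk_suminf)
    then show ?thesis using False by (simp add: A'_def cA_def)
  qed
  have SBeq: "(\<lambda>k. of_real (B' k) * z^k) sums (SB z - cB)" if z: "z \<noteq> 0" "norm z < \<rho>" for z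
  proof (cases gB)
    case True
    have s: "summable (\<lambda>i. of_real (B0 i) * z^i)" using \<rho>B(3)[OF True] z by (auto simp: \<rho>_def)
    have "SB z = (\<Sum>i. of_real (B0 i) * z^i)"
      unfolding SB_def using shift_sum(2)[where A=B and n=1 and z=z] s by (simp add: B0_def)
    then show ?thesis using s True by (simp add: B'_def cB_def summable_sums)
  next
    case False
    have zU: "z \<in> U - {0}" using z \<rho> by (auto simp: U_def)
    then have "\<not> summable (\<lambda>i. of_real (B0 i) * z^i)" using False gB_def by blast
    then have "\<not> summable (\<lambda>k. complex_of_real (B (k + 1)) * z ^ (k + 1))"
      using shift_sum(1)[where A=B and n=1 and z=z] by (simp add: B0_def)
    then have "SB z = u" unfolding SB_def u_def by (rule junk_suminf)
    then show ?thesis using False by (simp add: B'_def cB_def)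
  qed
  define \<alpha> where "\<alpha> k = a k - (if k = 1 then 1 else 0) + of_real (A' k)" for k
  define \<beta> where "\<beta> k = cnj (b k) - cnj \<sigma> * of_real (B' k)" for k
  have coef: "\<alpha> k * w^k + \<beta> k * cnj w ^ k = 0" if w: "norm w = 1" and k: "k \<ge> 1" for w k
  proof -
    define c where "c k = \<alpha> k * w^k + \<beta> k * cnj w ^ k" for k
    define K where "K = cnj \<sigma> * cnj cB - cA"
    have "(\<lambda>k. c k * of_real r ^ k) sums K" if r: "0 < r" "r < \<rho>" for r
    proof -
      define z where "z = of_real r * w"
      have z0: "z \<noteq> 0" and zn: "norm z < \<rho>" using r w by (auto simp: z_def norm_mult)
      have zU: "z \<in> U" using zn \<rho> by (auto simp: U_def)
      have s1: "(\<lambda>k. a k * z^k) sums ps a z" using sa[OF zU] by (simp add: ps_def summable_sums)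
      have s2: "(\<lambda>k. cnj (b k * z^k)) sums cnj (ps b z)"
        using sb[OF zU] unfolding ps_def by (intro sums_cnj[THEN iffD2] summable_sums)
      have s3: "(\<lambda>k. if k = 1 then z else 0) sums z"
        using sums_single[of 1 "\<lambda>_. z"] by simp
      have s4: "(\<lambda>k. of_real (A' k) * z^k) sums (SA z - cA)" by (rule SAeq[OF z0 zn])
      have s5: "(\<lambda>k. cnj \<sigma> * cnj (of_real (B' k) * z^k)) sums (cnj \<sigma> * cnj (SB z - cB))"
        using sums_cnj[THEN iffD2, OF SBeq[OF z0 zn]] by (rule sums_mult)
      have S: "(\<lambda>k. a k * z^k + cnj (b k * z^k) - (if k = 1 then z else 0) + of_real (A' k) * z^k
                   - cnj \<sigma> * cnj (of_real (B' k) * z^k))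
             sums (ps a z + cnj (ps b z) - z + (SA z - cA) - cnj \<sigma> * cnj (SB z - cB))"
        by (intro sums_add sums_diff s1 s2 s3 s4 s5)
      have "ps a z + cnj (ps b z) - z + (SA z - cA) - cnj \<sigma> * cnj (SB z - cB) = K"
        using eq[OF zU] unfolding SA_def[symmetric] SB_def[symmetric] K_def by (simp add: algebra_simps)
      moreover have "(\<lambda>k. a k * z^k + cnj (b k * z^k) - (if k = 1 then z else 0) + of_real (A' k) * z^k
                   - cnj \<sigma> * cnj (of_real (B' k) * z^k)) = (\<lambda>k. c k * of_real r ^ k)"
        by (auto simp: c_def \<alpha>_def \<beta>_def z_def power_mult_distrib algebra_simps)
      ultimately show ?thesis using S by simp
    qed
    then have "c k = 0" using RPS_zero[OF \<rho>(1) _ k, of c K] by blast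
    then show ?thesis by (simp add: c_def)
  qed
  have ab0: "\<alpha> k = 0 \<and> \<beta> k = 0" if k: "k \<ge> 1" for k
  proof -
    have e1: "\<alpha> k + \<beta> k = 0" using coef[of 1 k] k by simp
    have "cnj (cis (pi / (2 * real k))) ^ k = cnj (cis (pi / (2 * real k)) ^ k)" by simp
    also have "\<dots> = - \<i>" using cis_k[OF k] by simp
    finally have e2: "\<alpha> k * \<i> + \<beta> k * (- \<i>) = 0"
      using coef[of "cis (pi / (2 * real k))" k] k cis_k[OF k] by simp
    from e1 e2 show ?thesis by (auto simp: algebra_simps)
  qed
  have A'0: "A' 0 = 0" "A' 1 = 0" "B' 0 = 0" by (auto simp: A'_def B'_def A0_def B0_def)
  have "\<forall>k. a k = of_real ((if k = 1 then 1 else 0) - A' k)"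
  proof
    fix k show "a k = of_real ((if k = 1 then 1 else 0) - A' k)"
    proof (cases "k = 0")
      case True then show ?thesis using a0 A'0 by simp
    next
      case False then have "\<alpha> k = 0" using ab0 by simp
      then show ?thesis by (simp add: \<alpha>_def algebra_simps)
    qed
  qed
  moreover have "\<forall>k. b k = \<sigma> * of_real (B' k)"
  proof
    fix k show "b k = \<sigma> * of_real (B' k)"
    proof (cases "k = 0")
      case True then show ?thesis using b0 A'0 by simp
    next
      case False then have "\<beta> k = 0" using ab0 by simp
      then have "cnj (b k) = cnj \<sigma> * of_real (B' k)" by (simp add: \<beta>_def)
      then have "cnj (cnj (b k)) = cnj (cnj \<sigma> * of_real (B' k))" by simp
      then show ?thesis by simp
    qed
  qed
  moreover have "\<forall>k. A' k \<ge> 0 \<and> B' k \<ge> 0" using AB by (auto simp: A'_def B'_def A0_def B0_def)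
  ultimately show ?thesis using A'0 by blast
qed


lemma cs_real:
  fixes c :: "nat \<Rightarrow> real"
  assumes "summable (\<lambda>k. complex_of_real (c k) * complex_of_real r ^ k)"
  shows "summable (\<lambda>k. c k * r^k)"
    and "(\<Sum>k. complex_of_real (c k) * complex_of_real r ^ k) = complex_of_real (\<Sum>k. c k * r^k)"
proof -
  have e: "(\<lambda>k. complex_of_real (c k) * complex_of_real r ^ k) = (\<lambda>k. complex_of_real (c k * r^k))" by simp
  show s: "summable (\<lambda>k. c k * r^k)" using assms unfolding e summable_complex_of_real .
  have "(\<lambda>k. complex_of_real (c k * r^k)) sums complex_of_real (\<Sum>k. c k * r^k)"
    by (rule sums_of_real_iff[THEN iffD2, OF summable_sums[OF s]])
  then show "(\<Sum>k. complex_of_real (c k) * complex_of_real r ^ k) = complex_of_real (\<Sum>k. c k * r^k)"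
    unfolding e by (simp add: sums_iff)
qed

lemma pochhammer_mono_real:
  fixes x y :: real
  assumes "0 \<le> x" "x \<le> y"
  shows "pochhammer x j \<le> pochhammer y j"
proof -
  have "0 \<le> pochhammer x j \<and> pochhammer x j \<le> pochhammer y j"
  proof (induction j)
    case 0 then show ?case by simp
  next
    case (Suc j)
    have "pochhammer x j * (x + real j) \<le> pochhammer y j * (y + real j)"
      using Suc assms by (intro mult_mono) auto
    moreover have "0 \<le> pochhammer x j * (x + real j)" using Suc assms by simp
    ultimately show ?case by (simp add: pochhammer_Suc)
  qed
  then show ?thesis by simp
qed

definition acoef :: "(nat \<Rightarrow> real) \<Rightarrow> nat \<Rightarrow> complex" where
  "acoef Ah k = complex_of_real ((if k = 1 then 1 else 0) - Ah k)"

locale SHL =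
  fixes al be ga de p q eta :: real and m n :: nat
  assumes pos: "al > 0" "be > 0" "ga > 0" "de > 0" "p > 0" "q > 0"
    and eta: "0 \<le> eta" "eta < 1" and mn: "m \<ge> 1" "m > n"
begin

abbreviation C where "C r k \<equiv> Ccoef al be ga de p q r k"

definition sg :: complex where "sg = (-1)^(m-1)"
definition ep :: real where "ep = (-1)^(n+m-1)"
definition e where "e k = C m k - eta * C n k"
definition e' where "e' k = C m k + eta * ep * C n k"
definition wR where "wR Ah Bh k = e k * Ah k + e' k * Bh k"
definition bcoef where "bcoef Bh k = sg * complex_of_real (Bh k)"
definition good where "good Ah Bh \<longleftrightarrow> (\<forall>k. Ah k \<ge> 0 \<and> Bh k \<ge> 0) \<and> Ah 0 = 0 \<and> Ah 1 = 0 \<and> Bh 0 = 0 \<and>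
   summable (\<lambda>k. real k * (Ah k + Bh k)) \<and> (\<Sum>k. real k * (Ah k + Bh k)) \<le> 1 \<and>
   summable (wR Ah Bh) \<and> suminf (wR Ah Bh) \<le> 1 - eta \<and> wR Ah Bh 1 < 1 - eta"

lemma C_le1: "k \<le> 1 \<Longrightarrow> C r k = 1"
  by (simp add: Ccoef_def)

lemma C_pos: "C r k > 0"
proof (cases "k \<le> 1")
  case True then show ?thesis by (simp add: C_le1)
next
  case False
  have "pochhammer (real r + 1) (k - 1) > 0" by (rule pochhammer_pos) simp
  moreover have "Gamma (ga + q * real (k - 1)) > 0" "Gamma ga > 0" "Gamma (be + al * real (k - 1)) > 0"
    "Gamma (de + p * real (k - 1)) > 0" "Gamma de > 0"
    using pos by (auto intro!: Gamma_real_pos add_pos_nonneg)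
  ultimately show ?thesis using False by (simp add: Ccoef_def)
qed

lemma C_mono: "r1 \<le> r2 \<Longrightarrow> C r1 k \<le> C r2 k"
proof (cases "k \<le> 1")
  case True then show ?thesis by (simp add: C_le1)
next
  case False
  assume r: "r1 \<le> r2"
  have "pochhammer (real r1 + 1) (k - 1) \<le> pochhammer (real r2 + 1) (k - 1)"
    by (rule pochhammer_mono_real) (use r in auto)
  moreover have "Gamma (ga + q * real (k - 1)) > 0" "Gamma ga > 0" "Gamma (be + al * real (k - 1)) > 0"
    "Gamma (de + p * real (k - 1)) > 0" "Gamma de > 0"
    using pos by (auto intro!: Gamma_real_pos add_pos_nonneg)
  ultimately show ?thesis using False
    by (simp add: Ccoef_def divide_right_mono mult_right_mono)
qed

lemma Cnm: "C n k \<le> C m k" using C_mono mn by simp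

lemma ep_cases: "ep = 1 \<or> ep = -1" unfolding ep_def by (cases "even (n+m-1)") auto
lemma sg_cases: "sg = 1 \<or> sg = -1" unfolding sg_def by (cases "even (m-1)") auto
lemma sg_real: "sg = complex_of_real ((-1)^(m-1))" unfolding sg_def by simp
lemma cnj_sg: "cnj sg = sg" using sg_cases by auto
lemma sgm: "(-1)^m * sg = -1"
proof -
  have "(-1::complex)^m * (-1)^(m-1) = (-1)^(m + (m-1))" by (simp add: power_add)
  also have "m + (m-1) = Suc (2*(m-1))" using mn by simp
  finally show ?thesis unfolding sg_def by simp
qed
lemma sgn: "(-1)^n * sg = complex_of_real ep"
  unfolding sg_def ep_def using mn by (simp add: power_add[symmetric])

lemma e_ge: "e k \<ge> (1 - eta) * C m k"
  using Cnm[of k] eta by (simp add: e_def algebra_simps mult_left_mono)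
lemma e'_ge: "e' k \<ge> (1 - eta) * C m k"
proof -
  have a: "eta * C n k \<ge> 0" "eta * C m k \<ge> 0" "eta * C n k \<le> eta * C m k"
    using Cnm[of k] eta C_pos[of n k] C_pos[of m k] by (auto simp: mult_left_mono)
  have "eta * ep * C n k \<ge> - eta * C m k"
    using ep_cases a by auto
  then show ?thesis by (simp add: e'_def algebra_simps)
qed
lemma e_nn: "e k \<ge> 0" using e_ge[of k] C_pos[of m k] eta
  by (smt (verit) mult_nonneg_nonneg)
lemma e'_nn: "e' k \<ge> 0" using e'_ge[of k] C_pos[of m k] eta
  by (smt (verit) mult_nonneg_nonneg)
lemma e1: "e 1 = 1 - eta" by (simp add: e_def C_le1)
lemma e'1: "e' 1 = 1 + eta * ep" by (simp add: e'_def C_le1)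

end


context SHL
begin

lemma sg_nz: "sg \<noteq> 0" using sg_cases by auto
lemma norm_sg: "norm sg = 1" using sg_cases by auto

lemma Nec:
  assumes "SHbar al be ga de p q m n eta f"
  shows "\<exists>Ah Bh. good Ah Bh \<and> (\<forall>z\<in>U. f z = ps (acoef Ah) z + cnj (ps (bcoef Bh) z))"
proof -
  have SH: "SH al be ga de p q m n eta f" and ex: "\<exists>A B :: nat \<Rightarrow> real. (\<forall>k. A k \<ge> 0 \<and> B k \<ge> 0) \<and>
        (\<forall>z\<in>U. f z = z - (\<Sum>k. complex_of_real (A (k + 2)) * z ^ (k + 2))
                     + cnj ((-1) ^ (m - 1) * (\<Sum>k. complex_of_real (B (k + 1)) * z ^ (k + 1))))"
    using assms unfolding SHbar_def by simp_all
  obtain A B where AB: "\<forall>k. A k \<ge> 0 \<and> B k \<ge> 0" and feq2: "\<forall>z\<in>U. f z = z - (\<Sum>k. complex_of_real (A (k + 2)) * z ^ (k + 2))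
                     + cnj ((-1) ^ (m - 1) * (\<Sum>k. complex_of_real (B (k + 1)) * z ^ (k + 1)))"
    using ex by blast
  obtain a b where a0: "a 0 = 0" and a1: "a 1 = 1" and b0: "b 0 = 0" and b1: "cmod (b 1) < 1"
    and summ: "\<forall>z\<in>U. summable (\<lambda>k. a k * z ^ k) \<and> summable (\<lambda>k. b k * z ^ k) \<and>
           (\<forall>r\<in>{m, n}. summable (\<lambda>k. complex_of_real (C r k) * a k * z ^ k) \<and>
                        summable (\<lambda>k. complex_of_real (C r k) * b k * z ^ k))"
    and feq: "\<forall>z\<in>U. f z = ps a z + cnj (ps b z)"
    and inj: "inj_on f U"
    and sp: "\<forall>z\<in>U. cmod (deriv (ps b) z) < cmod (deriv (ps a) z)"
    and re: "\<forall>z\<in>U - {0}. Re (Phi_harm al be ga de p q m a b z / Phi_harm al be ga de p q n a b z) > eta"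
    using SH unfolding SH_def by (elim exE conjE) (rule that; assumption)
  have eq: "\<And>z. z \<in> U \<Longrightarrow> ps a z + cnj (ps b z) = z - (\<Sum>k. complex_of_real (A (k + 2)) * z ^ (k + 2))
                     + cnj (sg * (\<Sum>k. complex_of_real (B (k + 1)) * z ^ (k + 1)))"
    using feq feq2 by (simp add: sg_def)
  obtain Ah Bh where nn: "\<forall>k. Ah k \<ge> 0 \<and> Bh k \<ge> 0" and Ah0: "Ah 0 = 0" and Ah1: "Ah 1 = 0"
    and Bh0: "Bh 0 = 0" and aeq: "\<forall>k. a k = of_real ((if k = 1 then 1 else 0) - Ah k)"
    and beq: "\<forall>k. b k = sg * of_real (Bh k)"
    using Link[of sg a b A B, OF sg_cases a0 b0 _ _ _ eq] summ AB by blast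
  have ha: "a = acoef Ah" by (rule ext) (simp add: aeq acoef_def)
  have hb: "b = bcoef Bh" by (rule ext) (simp add: beq bcoef_def)
  have Bh1: "Bh 1 < 1" using b1 nn beq by (simp add: norm_mult norm_sg)
  have rU: "complex_of_real r \<in> U" if "0 \<le> r" "r < 1" for r using that by (simp add: U_def)
  have sa1: "\<And>x. norm x < 1 \<Longrightarrow> summable (\<lambda>k. a k * x^k)" using summ by (simp add: U_def)
  have sb1: "\<And>x. norm x < 1 \<Longrightarrow> summable (\<lambda>k. b k * x^k)" using summ by (simp add: U_def)
  have psa: "ps a = (\<lambda>z. \<Sum>k. a k * z^k)" by (rule ext) (simp add: ps_def)
  have psb: "ps b = (\<lambda>z. \<Sum>k. b k * z^k)" by (rule ext) (simp add: ps_def)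
  define hc where "hc k = real (Suc k) * ((if k = 0 then 1 else 0) - Ah (Suc k))" for k
  define gc where "gc k = real (Suc k) * Bh (Suc k)" for k
  have da: "diffs a k = complex_of_real (hc k)" for k by (simp add: diffs_def ha acoef_def hc_def)
  have db: "diffs b k = sg * complex_of_real (gc k)" for k by (simp add: diffs_def hb bcoef_def gc_def)
  have dA: "deriv (ps a) (of_real r) = of_real (\<Sum>k. hc k * r^k) \<and> summable (\<lambda>k. hc k * r^k)"
    if r: "0 \<le> r" "r < 1" for r
  proof -
    have nz: "norm (complex_of_real r) < 1" using r by simp
    have "((\<lambda>z. \<Sum>k. a k * z^k) has_field_derivative (\<Sum>k. diffs a k * (of_real r)^k)) (at (of_real r))"
      by (rule termdiffs_strong'[of 1]) (use sa1 nz in auto)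
    then have d: "deriv (ps a) (of_real r) = (\<Sum>k. diffs a k * (of_real r)^k)"
      unfolding psa by (rule DERIV_imp_deriv)
    have s: "summable (\<lambda>k. diffs a k * (of_real r)^k)"
      by (rule termdiff_converges[OF nz]) (use sa1 in auto)
    then have s': "summable (\<lambda>k. complex_of_real (hc k) * (of_real r)^k)" by (simp add: da)
    show ?thesis using d cs_real[OF s'] by (simp add: da)
  qed
  have dB: "deriv (ps b) (of_real r) = sg * of_real (\<Sum>k. gc k * r^k) \<and> summable (\<lambda>k. gc k * r^k)"
    if r: "0 \<le> r" "r < 1" for r
  proof -
    have nz: "norm (complex_of_real r) < 1" using r by simp
    have "((\<lambda>z. \<Sum>k. b k * z^k) has_field_derivative (\<Sum>k. diffs b k * (of_real r)^k)) (at (of_real r))"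
      by (rule termdiffs_strong'[of 1]) (use sb1 nz in auto)
    then have d: "deriv (ps b) (of_real r) = (\<Sum>k. diffs b k * (of_real r)^k)"
      unfolding psb by (rule DERIV_imp_deriv)
    have s: "summable (\<lambda>k. diffs b k * (of_real r)^k)"
      by (rule termdiff_converges[OF nz]) (use sb1 in auto)
    have e: "(\<lambda>k. diffs b k * (of_real r)^k) = (\<lambda>k. sg * (complex_of_real (gc k) * (of_real r)^k))"
      by (simp add: db mult.assoc)
    have s': "summable (\<lambda>k. complex_of_real (gc k) * (of_real r)^k)" using s sg_nz unfolding e by simp
    have "deriv (ps b) (of_real r) = sg * (\<Sum>k. complex_of_real (gc k) * (of_real r)^k)"
      using d s' unfolding e by (simp add: suminf_mult)
    then show ?thesis using cs_real[OF s'] by simp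
  qed
  define hA where "hA r = (\<Sum>k. hc k * r^k)" for r
  define gB where "gB r = (\<Sum>k. gc k * r^k)" for r
  have gB_nn: "gB r \<ge> 0" if "0 \<le> r" "r < 1" for r
    unfolding gB_def using dB[OF that] nn that by (intro suminf_nonneg) (auto simp: gc_def)
  have hlt: "\<bar>gB r\<bar> < \<bar>hA r\<bar>" if "0 \<le> r" "r < 1" for r
  proof -
    have "cmod (deriv (ps b) (of_real r)) < cmod (deriv (ps a) (of_real r))" using sp rU[OF that] by blast
    then show ?thesis using dA[OF that] dB[OF that] by (simp add: hA_def gB_def norm_mult norm_sg)
  qed
  have hApos: "hA r > 0" if r: "0 \<le> r" "r < 1" for r
  proof (rule G1[of hA, OF _ _ _ r])
    show "isCont hA x" if "0 \<le> x" "x < 1" for x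
    proof -
      have "\<And>r. 0 \<le> r \<Longrightarrow> r < 1 \<Longrightarrow> summable (\<lambda>k. hc k * r^k)" using dA by blast
      then show ?thesis unfolding hA_def by (rule powcont[of hc, OF _ that])
    qed
    show "hA 0 > 0" using Ah1 by (simp add: hA_def hc_def)
    show "hA x \<noteq> 0" if "0 \<le> x" "x < 1" for x using hlt[OF that] by auto
  qed
  define w where "w k = real k * (Ah k + Bh k)" for k
  have S: "summable w \<and> suminf w \<le> 1 \<and> w 1 < 1"
  proof (rule G2)
    show "w k \<ge> 0" for k using nn by (simp add: w_def)
    show "w 0 = 0" by (simp add: w_def)
    fix r :: real assume r: "0 < r" "r < 1"
    have s1: "(\<lambda>k. gc k * r^k) sums gB r" using dB[of r] r by (simp add: gB_def summable_sums)
    have s2: "(\<lambda>k. hc k * r^k) sums hA r" using dA[of r] r by (simp add: hA_def summable_sums)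
    have s3: "(\<lambda>k. if k = 0 then (1::real) else 0) sums 1" using sums_single[of 0 "\<lambda>_. (1::real)"] by simp
    have "(\<lambda>k. gc k * r^k + (if k = 0 then 1 else 0) - hc k * r^k) sums (gB r + 1 - hA r)"
      by (intro sums_add sums_diff s1 s2 s3)
    moreover have "(\<lambda>k. gc k * r^k + (if k = 0 then 1 else 0) - hc k * r^k) = (\<lambda>k. w (Suc k) * r^k)"
      by (rule ext) (auto simp: gc_def hc_def w_def algebra_simps)
    ultimately have "(\<lambda>k. w (Suc k) * r^k) sums (gB r + 1 - hA r)" by simp
    moreover have "gB r + 1 - hA r < 1" using hlt[of r] hApos[of r] gB_nn[of r] r by simp
    ultimately show "summable (\<lambda>k. w (Suc k) * r^k) \<and> (\<Sum>k. w (Suc k) * r^k) < 1"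
      by (simp add: sums_iff)
  qed
  have PA: "Phi_ps al be ga de p q r' a (of_real r) = of_real (\<Sum>k. (C r' k * ((if k = 1 then 1 else 0) - Ah k)) * r^k)
     \<and> summable (\<lambda>k. (C r' k * ((if k = 1 then 1 else 0) - Ah k)) * r^k)"
    if r: "0 \<le> r" "r < 1" and r': "r' \<in> {m, n}" for r r'
  proof -
    have s: "summable (\<lambda>k. complex_of_real (C r' k) * a k * (of_real r) ^ k)" using summ rU[OF r] r' by blast
    have e: "(\<lambda>k. complex_of_real (C r' k) * a k * (of_real r) ^ k) =
       (\<lambda>k. complex_of_real (C r' k * ((if k = 1 then 1 else 0) - Ah k)) * (of_real r) ^ k)"
      by (rule ext) (simp add: ha acoef_def)
    show ?thesis using cs_real[OF s[unfolded e]] unfolding Phi_ps_def e by simp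
  qed
  have PB: "Phi_ps al be ga de p q r' b (of_real r) = sg * of_real (\<Sum>k. (C r' k * Bh k) * r^k)
     \<and> summable (\<lambda>k. (C r' k * Bh k) * r^k)"
    if r: "0 \<le> r" "r < 1" and r': "r' \<in> {m, n}" for r r'
  proof -
    have s: "summable (\<lambda>k. complex_of_real (C r' k) * b k * (of_real r) ^ k)" using summ rU[OF r] r' by blast
    have e: "(\<lambda>k. complex_of_real (C r' k) * b k * (of_real r) ^ k) =
       (\<lambda>k. sg * (complex_of_real (C r' k * Bh k) * (of_real r) ^ k))"
      by (rule ext) (simp add: hb bcoef_def)
    have s': "summable (\<lambda>k. complex_of_real (C r' k * Bh k) * (of_real r) ^ k)" using s sg_nz unfolding e by simp
    have "Phi_ps al be ga de p q r' b (of_real r) = sg * (\<Sum>k. complex_of_real (C r' k * Bh k) * (of_real r) ^ k)"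
      unfolding Phi_ps_def e using s' by (simp add: suminf_mult)
    then show ?thesis using cs_real[OF s'] by simp
  qed
  define Nc where "Nc k = C m k * ((if k = 1 then 1 else 0) - Ah k - Bh k)" for k
  define Dc where "Dc k = C n k * ((if k = 1 then 1 else 0) - Ah k + ep * Bh k)" for k
  have HN: "Phi_harm al be ga de p q m a b (of_real r) = of_real (\<Sum>k. Nc k * r^k) \<and> summable (\<lambda>k. Nc k * r^k)"
    if r: "0 \<le> r" "r < 1" for r
  proof -
    have 1: "(\<lambda>k. (C m k * ((if k = 1 then 1 else 0) - Ah k)) * r^k) sums (\<Sum>k. (C m k * ((if k = 1 then 1 else 0) - Ah k)) * r^k)"
      using PA[OF r, of m] by (simp add: summable_sums)
    have 2: "(\<lambda>k. (C m k * Bh k) * r^k) sums (\<Sum>k. (C m k * Bh k) * r^k)"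
      using PB[OF r, of m] by (simp add: summable_sums)
    have "(\<lambda>k. (C m k * ((if k = 1 then 1 else 0) - Ah k)) * r^k - (C m k * Bh k) * r^k) sums
       ((\<Sum>k. (C m k * ((if k = 1 then 1 else 0) - Ah k)) * r^k) - (\<Sum>k. (C m k * Bh k) * r^k))"
      by (rule sums_diff[OF 1 2])
    moreover have "(\<lambda>k. (C m k * ((if k = 1 then 1 else 0) - Ah k)) * r^k - (C m k * Bh k) * r^k) = (\<lambda>k. Nc k * r^k)"
      by (rule ext) (simp add: Nc_def algebra_simps)
    ultimately have S: "(\<lambda>k. Nc k * r^k) sums ((\<Sum>k. (C m k * ((if k = 1 then 1 else 0) - Ah k)) * r^k) - (\<Sum>k. (C m k * Bh k) * r^k))"
      by simp
    have "Phi_harm al be ga de p q m a b (of_real r) = of_real ((\<Sum>k. (C m k * ((if k = 1 then 1 else 0) - Ah k)) * r^k) - (\<Sum>k. (C m k * Bh k) * r^k))"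
      unfolding Phi_harm_def using PA[OF r, of m] PB[OF r, of m] sgm cnj_sg
      by (simp add: mult.assoc[symmetric])
    then show ?thesis using S by (simp add: sums_iff)
  qed
  have HD: "Phi_harm al be ga de p q n a b (of_real r) = of_real (\<Sum>k. Dc k * r^k) \<and> summable (\<lambda>k. Dc k * r^k)"
    if r: "0 \<le> r" "r < 1" for r
  proof -
    have 1: "(\<lambda>k. (C n k * ((if k = 1 then 1 else 0) - Ah k)) * r^k) sums (\<Sum>k. (C n k * ((if k = 1 then 1 else 0) - Ah k)) * r^k)"
      using PA[OF r, of n] by (simp add: summable_sums)
    have 2: "(\<lambda>k. ep * ((C n k * Bh k) * r^k)) sums (ep * (\<Sum>k. (C n k * Bh k) * r^k))"
      using PB[OF r, of n] by (intro sums_mult) (simp add: summable_sums)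
    have "(\<lambda>k. (C n k * ((if k = 1 then 1 else 0) - Ah k)) * r^k + ep * ((C n k * Bh k) * r^k)) sums
       ((\<Sum>k. (C n k * ((if k = 1 then 1 else 0) - Ah k)) * r^k) + ep * (\<Sum>k. (C n k * Bh k) * r^k))"
      by (rule sums_add[OF 1 2])
    moreover have "(\<lambda>k. (C n k * ((if k = 1 then 1 else 0) - Ah k)) * r^k + ep * ((C n k * Bh k) * r^k)) = (\<lambda>k. Dc k * r^k)"
      by (rule ext) (simp add: Dc_def algebra_simps)
    ultimately have S: "(\<lambda>k. Dc k * r^k) sums ((\<Sum>k. (C n k * ((if k = 1 then 1 else 0) - Ah k)) * r^k) + ep * (\<Sum>k. (C n k * Bh k) * r^k))"
      by simp
    have "Phi_harm al be ga de p q n a b (of_real r) = of_real ((\<Sum>k. (C n k * ((if k = 1 then 1 else 0) - Ah k)) * r^k) + ep * (\<Sum>k. (C n k * Bh k) * r^k))"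
      unfolding Phi_harm_def using PA[OF r, of n] PB[OF r, of n] sgn cnj_sg
      by (simp add: mult.assoc[symmetric])
    then show ?thesis using S by (simp add: sums_iff)
  qed
  define dd where "dd r = (\<Sum>k. Dc (Suc k) * r^k)" for r
  have Dc0: "Dc 0 = 0" using Ah0 Bh0 by (simp add: Dc_def)
  have Nc0: "Nc 0 = 0" using Ah0 Bh0 by (simp add: Nc_def)
  have ddS: "summable (\<lambda>k. Dc (Suc k) * r^k) \<and> (\<Sum>k. Dc k * r^k) = dd r * r" if r: "0 \<le> r" "r < 1" for r
    using powser_split_head[of Dc r] HD[OF r] Dc0 by (simp add: dd_def)
  have ddpos: "dd r > 0" if r: "0 \<le> r" "r < 1" for r
  proof (rule G1[of dd, OF _ _ _ r])
    show "isCont dd x" if "0 \<le> x" "x < 1" for x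
    proof -
      have "\<And>r. 0 \<le> r \<Longrightarrow> r < 1 \<Longrightarrow> summable (\<lambda>k. Dc (Suc k) * r^k)" using ddS by blast
      then show ?thesis unfolding dd_def by (rule powcont[of "\<lambda>k. Dc (Suc k)", OF _ that])
    qed
    have "Bh 1 \<ge> 0" using nn by blast
    then have "1 + ep * Bh 1 > 0" using ep_cases Bh1 by auto
    then show "dd 0 > 0" using Ah1 by (simp add: dd_def Dc_def C_le1)
    show "dd x \<noteq> 0" if x: "0 \<le> x" "x < 1" for x
    proof (cases "x = 0")
      case True then show ?thesis using \<open>1 + ep * Bh 1 > 0\<close> Ah1 by (simp add: dd_def Dc_def C_le1)
    next
      case False
      then have "of_real x \<in> U - {0}" using rU[OF x] by simp
      then have "Re (Phi_harm al be ga de p q m a b (of_real x) / Phi_harm al be ga de p q n a b (of_real x)) > eta"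
        using re by blast
      moreover have "Phi_harm al be ga de p q n a b (of_real x) = of_real (dd x * x)"
        using HD[OF x] ddS[OF x] by simp
      ultimately show ?thesis using eta by auto
    qed
  qed
  have R: "summable (wR Ah Bh) \<and> suminf (wR Ah Bh) \<le> 1 - eta \<and> wR Ah Bh 1 < 1 - eta"
  proof (rule G2)
    show "wR Ah Bh k \<ge> 0" for k using nn e_nn e'_nn by (simp add: wR_def)
    show "wR Ah Bh 0 = 0" using Ah0 Bh0 by (simp add: wR_def)
    fix r :: real assume r: "0 < r" "r < 1"
    have r': "0 \<le> r" "r < 1" using r by auto
    have "of_real r \<in> U - {0}" using rU[OF r'] r by simp
    then have gt: "Re (Phi_harm al be ga de p q m a b (of_real r) / Phi_harm al be ga de p q n a b (of_real r)) > eta"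
      using re by blast
    have Dpos: "(\<Sum>k. Dc k * r^k) > 0" using ddS[OF r'] ddpos[OF r'] r by simp
    have "(\<Sum>k. Nc k * r^k) / (\<Sum>k. Dc k * r^k) > eta" using gt HN[OF r'] HD[OF r'] by simp
    then have NDgt: "(\<Sum>k. Nc k * r^k) - eta * (\<Sum>k. Dc k * r^k) > 0" using Dpos by (simp add: field_simps)
    define Ec where "Ec k = Nc k - eta * Dc k" for k
    have sE: "(\<lambda>k. Ec k * r^k) sums ((\<Sum>k. Nc k * r^k) - eta * (\<Sum>k. Dc k * r^k))"
    proof -
      have "(\<lambda>k. Nc k * r^k - eta * (Dc k * r^k)) sums ((\<Sum>k. Nc k * r^k) - eta * (\<Sum>k. Dc k * r^k))"
        using HN[OF r'] HD[OF r'] by (intro sums_diff sums_mult summable_sums) auto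
      moreover have "(\<lambda>k. Nc k * r^k - eta * (Dc k * r^k)) = (\<lambda>k. Ec k * r^k)" by (rule ext) (simp add: Ec_def algebra_simps)
      ultimately show ?thesis by simp
    qed
    have "(\<Sum>k. Ec k * r^k) = Ec 0 + (\<Sum>k. Ec (Suc k) * r^k) * r" and sE1: "summable (\<lambda>k. Ec (Suc k) * r^k)"
      using powser_split_head[of Ec r] sE by (auto simp: sums_iff)
    then have "(\<Sum>k. Ec (Suc k) * r^k) * r > 0" using sE NDgt Nc0 Dc0 by (simp add: Ec_def sums_iff)
    then have pos: "(\<Sum>k. Ec (Suc k) * r^k) > 0" using r by (simp add: zero_less_mult_iff)
    have ec: "Ec (Suc k) = (if k = 0 then 1 - eta else 0) - wR Ah Bh (Suc k)" for k
      using Ah1 ep_cases by (auto simp: Ec_def Nc_def Dc_def wR_def e_def e'_def C_le1 algebra_simps)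
    have s3: "(\<lambda>k. (if k = 0 then 1 - eta else 0) * r^k) sums (1 - eta)"
    proof -
      have "(\<lambda>k. (if k = 0 then 1 - eta else 0) * r^k) = (\<lambda>k. if k = 0 then 1 - eta else 0)" by (rule ext) simp
      then show ?thesis using sums_single[of 0 "\<lambda>_. (1 - eta)"] by simp
    qed
    have "(\<lambda>k. (if k = 0 then 1 - eta else 0) * r^k - Ec (Suc k) * r^k) sums ((1 - eta) - (\<Sum>k. Ec (Suc k) * r^k))"
      using s3 sE1 by (intro sums_diff summable_sums) auto
    moreover have "(\<lambda>k. (if k = 0 then 1 - eta else 0) * r^k - Ec (Suc k) * r^k) = (\<lambda>k. wR Ah Bh (Suc k) * r^k)"
      by (rule ext) (simp add: ec algebra_simps)
    ultimately have "(\<lambda>k. wR Ah Bh (Suc k) * r^k) sums ((1 - eta) - (\<Sum>k. Ec (Suc k) * r^k))" by simp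
    then show "summable (\<lambda>k. wR Ah Bh (Suc k) * r^k) \<and> (\<Sum>k. wR Ah Bh (Suc k) * r^k) < 1 - eta"
      using pos by (simp add: sums_iff)
  qed
  have S': "summable (\<lambda>k. real k * (Ah k + Bh k))" "(\<Sum>k. real k * (Ah k + Bh k)) \<le> 1"
    using S unfolding w_def by auto
  have "good Ah Bh" unfolding good_def using nn Ah0 Ah1 Bh0 S' R by simp
  moreover have "\<forall>z\<in>U. f z = ps (acoef Ah) z + cnj (ps (bcoef Bh) z)" using feq ha hb by simp
  ultimately show ?thesis by blast
qed

end


lemma infsum_nat_suminf: "f summable_on (UNIV::nat set) \<Longrightarrow> infsum f UNIV = suminf f"
  using has_sum_imp_sums[OF has_sum_infsum] sums_unique by blast

lemma SwapEq:
  fixes x :: "nat \<Rightarrow> nat \<Rightarrow> complex" and M :: "nat \<Rightarrow> nat \<Rightarrow> real"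
  assumes bnd: "\<And>j k. norm (x j k) \<le> M j k" and sM: "\<And>j. summable (M j)" and sS: "summable (\<lambda>j. \<Sum>k. M j k)"
  shows "(\<Sum>j. \<Sum>k. x j k) = (\<Sum>k. \<Sum>j. x j k)"
proof -
  have Mnn: "M j k \<ge> 0" for j k using bnd[of j k] norm_ge_zero order_trans by blast
  have iM: "infsum (\<lambda>k. M j k) UNIV = suminf (M j)" for j
    using infsum_nat_suminf[of "M j"] sM[of j] Mnn summable_on_UNIV_nonneg_real_iff by metis
  have Mabs: "(\<lambda>p. norm (case p of (j,k) \<Rightarrow> M j k)) summable_on Sigma UNIV (\<lambda>_. UNIV)"
  proof (subst Infinite_Sum.abs_summable_on_Sigma_iff, intro conjI ballI)
    show "(\<lambda>k. norm (case (j, k) of (j, k) \<Rightarrow> M j k)) summable_on UNIV" for j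
      using sM[of j] Mnn by (simp add: summable_on_UNIV_nonneg_real_iff)
    have "infsum (\<lambda>k. norm (case (j, k) of (j, k) \<Rightarrow> M j k)) UNIV = suminf (M j)" for j
      using iM[of j] Mnn by (simp add: abs_of_nonneg)
    moreover have "(\<lambda>j. norm (suminf (M j))) summable_on UNIV"
      using sS Mnn sM by (simp add: summable_on_UNIV_nonneg_real_iff suminf_nonneg abs_of_nonneg)
    ultimately show "(\<lambda>j. norm (infsum (\<lambda>k. norm (case (j, k) of (j, k) \<Rightarrow> M j k)) UNIV)) summable_on UNIV"
      by simp
  qed
  have xabs: "(\<lambda>p. norm (case p of (j,k) \<Rightarrow> x j k)) summable_on UNIV \<times> UNIV"
    by (rule Infinite_Sum.abs_summable_on_comparison_test[OF Mabs]) (use bnd Mnn in \<open>auto simp: abs_of_nonneg\<close>)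
  have xs: "(\<lambda>(j,k). x j k) summable_on UNIV \<times> UNIV" by (rule abs_summable_summable[OF xabs])
  have xs': "(\<lambda>(k,j). x j k) summable_on UNIV \<times> UNIV"
    using xs summable_on_swap[of "\<lambda>(j,k). x j k" UNIV UNIV] by (simp add: case_prod_unfold)
  have in1: "infsum (\<lambda>k. x j k) UNIV = (\<Sum>k. x j k)" for j
  proof -
    have "summable (\<lambda>k. norm (x j k))" by (rule summable_comparison_test[OF _ sM[of j]]) (use bnd in auto)
    then show ?thesis by (intro infsum_nat_suminf norm_summable_imp_summable_on)
  qed
  have in2: "infsum (\<lambda>j. x j k) UNIV = (\<Sum>j. x j k)" for k
  proof -
    have "norm (x j k) \<le> suminf (M j)" for j
      using bnd[of j k] sum_le_suminf[of "M j" "{k}"] sM Mnn by force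
    then have "summable (\<lambda>j. norm (x j k))" by (intro summable_comparison_test[OF _ sS]) auto
    then show ?thesis by (intro infsum_nat_suminf norm_summable_imp_summable_on)
  qed
  have o1: "(\<lambda>j. infsum (\<lambda>k. x j k) UNIV) summable_on UNIV"
    using summable_on_Sigma_banach[of x UNIV "\<lambda>_. UNIV"] xs by simp
  have o2: "(\<lambda>k. infsum (\<lambda>j. x j k) UNIV) summable_on UNIV"
    using summable_on_Sigma_banach[of "\<lambda>k j. x j k" UNIV "\<lambda>_. UNIV"] xs' by simp
  have "(\<Sum>j. \<Sum>k. x j k) = infsum (\<lambda>j. infsum (\<lambda>k. x j k) UNIV) UNIV"
    using infsum_nat_suminf[OF o1] in1 by simp
  also have "\<dots> = infsum (\<lambda>k. infsum (\<lambda>j. x j k) UNIV) UNIV"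
    by (rule infsum_swap_banach[OF xs])
  also have "\<dots> = (\<Sum>k. \<Sum>j. x j k)"
    using infsum_nat_suminf[OF o2] in2 by simp
  finally show ?thesis .
qed

lemma SwapLe:
  fixes x :: "nat \<Rightarrow> nat \<Rightarrow> real"
  assumes nn: "\<And>j k. x j k \<ge> 0" and sj: "\<And>j. summable (x j)" and sk: "\<And>k. summable (\<lambda>j. x j k)"
    and le: "\<And>j. suminf (x j) \<le> y j" and sy: "summable y"
  shows "summable (\<lambda>k. \<Sum>j. x j k) \<and> (\<Sum>k. \<Sum>j. x j k) \<le> suminf y"
proof -
  have part: "(\<Sum>k<K. \<Sum>j. x j k) \<le> suminf y" for K
  proof -
    have "(\<Sum>k<K. \<Sum>j. x j k) = (\<Sum>j. \<Sum>k<K. x j k)"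
      by (rule suminf_sum[symmetric]) (use sk in auto)
    also have "\<dots> \<le> suminf y"
    proof (rule suminf_le)
      show "(\<Sum>k<K. x j k) \<le> y j" for j
        using sum_le_suminf[of "x j" "{..<K}"] sj nn le[of j] by force
      show "summable (\<lambda>j. \<Sum>k<K. x j k)" by (rule summable_sum) (use sk in auto)
    qed (use sy in auto)
    finally show ?thesis .
  qed
  have s: "summable (\<lambda>k. \<Sum>j. x j k)"
    by (rule summableI_nonneg_bounded[where x="suminf y"]) (use nn sk part in \<open>auto intro: suminf_nonneg\<close>)
  then show ?thesis using suminf_le_const[OF s part] by simp
qed


lemma norm_cz: "norm (z::complex) < 1 \<Longrightarrow> norm (c * z^k) \<le> norm c"
proof -
  assume "norm z < 1"
  then have zk: "norm z ^ k \<le> 1" by (simp add: power_le_one)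
  have "norm (c * z^k) = norm c * norm z ^ k" by (simp add: norm_mult norm_power)
  also have "\<dots> \<le> norm c" by (rule mult_left_le[OF zk norm_ge_zero])
  finally show ?thesis .
qed

context SHL
begin

lemma good_facts:
  assumes "good Ah Bh"
  shows "\<And>k. 0 \<le> Ah k" "\<And>k. 0 \<le> Bh k" "Ah 0 = 0" "Ah 1 = 0" "Bh 0 = 0"
    "summable (\<lambda>k. real k * (Ah k + Bh k))" "(\<Sum>k. real k * (Ah k + Bh k)) \<le> 1"
    "summable (wR Ah Bh)" "suminf (wR Ah Bh) \<le> 1 - eta" "wR Ah Bh 1 < 1 - eta"
  using assms unfolding good_def by auto

lemma good_bounds:
  assumes g: "good Ah Bh"
  shows "Ah k \<le> 1" "Bh k \<le> 1" "summable Ah" "summable Bh" "suminf Ah \<le> 1" "suminf Bh \<le> 1"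
    "Ah k \<le> real k * (Ah k + Bh k)" "Bh k \<le> real k * (Ah k + Bh k)" "Bh 1 < 1"
proof -
  note f = good_facts[OF g]
  have le: "Ah k \<le> real k * (Ah k + Bh k) \<and> Bh k \<le> real k * (Ah k + Bh k)" for k
  proof (cases k)
    case 0 then show ?thesis using f by simp
  next
    case (Suc j)
    have "Ah k + Bh k \<le> real k * (Ah k + Bh k)" using Suc f(1,2)[of k] by (simp add: mult_le_cancel_right1)
    then show ?thesis using f(1,2)[of k] by linarith
  qed
  have vle: "real k * (Ah k + Bh k) \<le> 1" for k
    using sum_le_suminf[of "\<lambda>k. real k * (Ah k + Bh k)" "{k}"] f(1,2,6,7) by force
  show "Ah k \<le> 1" "Bh k \<le> 1" using le[of k] vle[of k] by auto
  show sA: "summable Ah" by (rule summable_comparison_test[OF _ f(6)]) (use le f in auto)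
  show sB: "summable Bh" by (rule summable_comparison_test[OF _ f(6)]) (use le f in auto)
  show "suminf Ah \<le> 1" using suminf_le[OF _ sA f(6)] le f(7) by force
  show "suminf Bh \<le> 1" using suminf_le[OF _ sB f(6)] le f(7) by force
  show "Ah k \<le> real k * (Ah k + Bh k)" "Bh k \<le> real k * (Ah k + Bh k)" using le by auto
  have "wR Ah Bh 1 = (1 + eta * ep) * Bh 1" using f e1 e'1 by (simp add: wR_def)
  then have lt: "(1 + eta * ep) * Bh 1 < 1 - eta" using f by simp
  from ep_cases show "Bh 1 < 1"
  proof
    assume "ep = 1"
    then have "(1 + eta) * Bh 1 < 1 - eta" using lt by simp
    moreover have "Bh 1 \<le> (1 + eta) * Bh 1" using eta f(2)[of 1] by (simp add: algebra_simps)
    ultimately show ?thesis using eta by linarith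
  next
    assume "ep = -1"
    then have "(1 - eta) * Bh 1 < (1 - eta) * 1" using lt by (simp add: algebra_simps)
    then show ?thesis using eta by (simp add: mult_less_cancel_left_pos)
  qed
qed

lemma ps_norm_le:
  assumes g: "good Ah Bh" and z: "z \<in> U"
  shows "summable (\<lambda>k. acoef Ah k * z^k)" "norm (ps (acoef Ah) z) \<le> 2"
    "summable (\<lambda>k. bcoef Bh k * z^k)" "norm (ps (bcoef Bh) z) \<le> 1"
proof -
  note f = good_facts[OF g] and gb = good_bounds[OF g]
  have nz: "norm z < 1" using z by (simp add: U_def)
  have zk: "norm z ^ k \<le> 1" for k using nz by (simp add: power_le_one)
  have ba: "norm (acoef Ah k * z^k) \<le> (if k = 1 then 1 else 0) + Ah k" for k
  proof -
    have "norm (acoef Ah k) \<le> (if k = 1 then 1 else 0) + Ah k" using f(1)[of k] f(4) by (auto simp: acoef_def)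
    then show ?thesis using norm_cz[OF nz, of "acoef Ah k" k] by linarith
  qed
  have bb: "norm (bcoef Bh k * z^k) \<le> Bh k" for k
    using zk[of k] f(2)[of k] by (simp add: bcoef_def norm_mult norm_sg norm_power mult_left_le)
  have s1: "(\<lambda>k. (if k = 1 then 1 else 0) + Ah k) sums (1 + suminf Ah)"
    using sums_add[OF sums_single[of 1 "\<lambda>_. (1::real)"] summable_sums[OF gb(3)]] by simp
  show "summable (\<lambda>k. acoef Ah k * z^k)" by (rule summable_comparison_test[OF _ sums_summable[OF s1]]) (use ba in auto)
  have "norm (ps (acoef Ah) z) \<le> 1 + suminf Ah"
    unfolding ps_def using norm_suminf_le[OF ba sums_summable[OF s1]] s1 by (simp add: sums_iff)
  then show "norm (ps (acoef Ah) z) \<le> 2" using gb(5) by simp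
  show "summable (\<lambda>k. bcoef Bh k * z^k)" by (rule summable_comparison_test[OF _ gb(4)]) (use bb in auto)
  have "norm (ps (bcoef Bh) z) \<le> suminf Bh"
    unfolding ps_def using norm_suminf_le[OF bb gb(4)] by simp
  then show "norm (ps (bcoef Bh) z) \<le> 1" using gb(6) by simp
qed

lemma Conv:
  assumes g: "\<And>j. good (Ah j) (Bh j)" and t: "\<And>j. t j \<ge> 0" "t sums 1"
  shows "good (\<lambda>k. \<Sum>j. t j * Ah j k) (\<lambda>k. \<Sum>j. t j * Bh j k)"
    and "\<And>z. z \<in> U \<Longrightarrow> (\<Sum>j. complex_of_real (t j) * (ps (acoef (Ah j)) z + cnj (ps (bcoef (Bh j)) z)))
          = ps (acoef (\<lambda>k. \<Sum>j. t j * Ah j k)) z + cnj (ps (bcoef (\<lambda>k. \<Sum>j. t j * Bh j k)) z)"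
proof -
  define Ac where "Ac k = (\<Sum>j. t j * Ah j k)" for k
  define Bc where "Bc k = (\<Sum>j. t j * Bh j k)" for k
  note f = good_facts[OF g] and gb = good_bounds[OF g]
  have st: "summable t" "suminf t = 1" using t by (auto simp: sums_iff)
  have sA: "summable (\<lambda>j. t j * Ah j k)" for k
    by (rule summable_comparison_test[OF _ st(1)]) (use t gb f in \<open>auto intro!: exI[of _ 0] simp: abs_mult mult_left_le\<close>)
  have sB: "summable (\<lambda>j. t j * Bh j k)" for k
    by (rule summable_comparison_test[OF _ st(1)]) (use t gb f in \<open>auto intro!: exI[of _ 0] simp: abs_mult mult_left_le\<close>)
  have Ac_nn: "Ac k \<ge> 0" for k unfolding Ac_def using sA f t by (intro suminf_nonneg) auto
  have Bc_nn: "Bc k \<ge> 0" for k unfolding Bc_def using sB f t by (intro suminf_nonneg) auto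
  have Ac0: "Ac 0 = 0" "Ac 1 = 0" "Bc 0 = 0" using f by (auto simp: Ac_def Bc_def)
  define xv where "xv j k = t j * (real k * (Ah j k + Bh j k))" for j k
  have xv_eq: "(\<Sum>j. xv j k) = real k * (Ac k + Bc k)" for k
  proof -
    have "(\<lambda>j. xv j k) = (\<lambda>j. real k * (t j * Ah j k + t j * Bh j k))" by (rule ext) (simp add: xv_def algebra_simps)
    moreover have "(\<Sum>j. real k * (t j * Ah j k + t j * Bh j k)) = real k * ((\<Sum>j. t j * Ah j k) + (\<Sum>j. t j * Bh j k))"
      using suminf_mult[OF summable_add[OF sA[of k] sB[of k]], of "real k"] suminf_add[OF sA[of k] sB[of k]] by simp
    ultimately show ?thesis by (simp add: Ac_def Bc_def)
  qed
  have Sv: "summable (\<lambda>k. \<Sum>j. xv j k) \<and> (\<Sum>k. \<Sum>j. xv j k) \<le> suminf t"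
  proof (rule SwapLe)
    show "xv j k \<ge> 0" for j k using t f by (simp add: xv_def)
    show "summable (xv j)" for j using f unfolding xv_def by (intro summable_mult) auto
    show "summable (\<lambda>j. xv j k)" for k
    proof -
      have "(\<lambda>j. xv j k) = (\<lambda>j. real k * (t j * Ah j k + t j * Bh j k))" by (rule ext) (simp add: xv_def algebra_simps)
      then show ?thesis using sA[of k] sB[of k] by (simp add: summable_add)
    qed
    show "suminf (xv j) \<le> t j" for j
      unfolding xv_def using f[of j] t(1)[of j] by (simp add: suminf_mult mult_left_le)
    show "summable t" by (rule st)
  qed
  define xw where "xw j k = t j * wR (Ah j) (Bh j) k" for j k
  have xw_eq: "(\<Sum>j. xw j k) = wR Ac Bc k" for k
  proof -
    have "(\<lambda>j. xw j k) = (\<lambda>j. e k * (t j * Ah j k) + e' k * (t j * Bh j k))" by (rule ext) (simp add: xw_def wR_def algebra_simps)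
    moreover have "(\<Sum>j. e k * (t j * Ah j k) + e' k * (t j * Bh j k)) = e k * (\<Sum>j. t j * Ah j k) + e' k * (\<Sum>j. t j * Bh j k)"
      using suminf_add[OF summable_mult[OF sA[of k], of "e k"] summable_mult[OF sB[of k], of "e' k"]]
        suminf_mult[OF sA[of k], of "e k"] suminf_mult[OF sB[of k], of "e' k"] by simp
    ultimately show ?thesis by (simp add: Ac_def Bc_def wR_def)
  qed
  have sxw: "summable (\<lambda>j. xw j k)" for k
  proof -
    have "(\<lambda>j. xw j k) = (\<lambda>j. e k * (t j * Ah j k) + e' k * (t j * Bh j k))" by (rule ext) (simp add: xw_def wR_def algebra_simps)
    then show ?thesis using sA[of k] sB[of k] by (simp add: summable_add)
  qed
  have Sw: "summable (\<lambda>k. \<Sum>j. xw j k) \<and> (\<Sum>k. \<Sum>j. xw j k) \<le> suminf (\<lambda>j. t j * (1 - eta))"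
  proof (rule SwapLe)
    show "xw j k \<ge> 0" for j k using t f e_nn e'_nn by (simp add: xw_def wR_def)
    show "summable (xw j)" for j using f unfolding xw_def by (intro summable_mult) auto
    show "summable (\<lambda>j. xw j k)" for k by (rule sxw)
    show "suminf (xw j) \<le> t j * (1 - eta)" for j
      unfolding xw_def using f[of j] t(1)[of j] by (simp add: suminf_mult mult_left_mono)
    show "summable (\<lambda>j. t j * (1 - eta))" using st by (intro summable_mult2)
  qed
  have w1: "wR Ac Bc 1 < 1 - eta"
  proof -
    have "\<exists>i. t i > 0"
    proof (rule ccontr)
      assume "\<not> (\<exists>i. t i > 0)"
      then have "\<not> t j > 0" for j by blast
      then have "t j = 0" for j using t(1)[of j] by (meson not_le order.antisym)
      then have "t = (\<lambda>_. 0)" by auto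
      then have "t sums 0" by simp
      then show False using t(2) sums_unique2 by fastforce
    qed
    then obtain i where ti: "t i > 0" by blast
    have "(\<lambda>j. t j * (1 - eta) - xw j 1) sums ((1 - eta) - wR Ac Bc 1)"
      using sums_diff[OF sums_mult2[OF t(2), of "1 - eta"] summable_sums[OF sxw[of 1]]] xw_eq[of 1] by simp
    moreover have "0 < (\<Sum>j. t j * (1 - eta) - xw j 1)"
    proof (rule suminf_pos2)
      show "summable (\<lambda>j. t j * (1 - eta) - xw j 1)" using calculation by (rule sums_summable)
      show "0 \<le> t j * (1 - eta) - xw j 1" for j
      proof -
        have "wR (Ah j) (Bh j) 1 \<le> 1 - eta" using f(10)[of j] by simp
        then have "t j * wR (Ah j) (Bh j) 1 \<le> t j * (1 - eta)" using t(1)[of j] by (rule mult_left_mono)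
        then show "0 \<le> t j * (1 - eta) - xw j 1" by (simp add: xw_def)
      qed
      have "t i * wR (Ah i) (Bh i) 1 < t i * (1 - eta)" using f(10)[of i] ti by (intro mult_strict_left_mono) auto
      then show "0 < t i * (1 - eta) - xw i 1" by (simp add: xw_def)
    qed
    ultimately show ?thesis by (simp add: sums_iff)
  qed
  show "good (\<lambda>k. \<Sum>j. t j * Ah j k) (\<lambda>k. \<Sum>j. t j * Bh j k)"
    unfolding Ac_def[symmetric] Bc_def[symmetric] good_def
    using Ac_nn Bc_nn Ac0 Sv xv_eq Sw xw_eq w1 st by (simp add: suminf_mult2[symmetric])
  fix z assume z: "z \<in> U"
  have nz: "norm z < 1" using z by (simp add: U_def)
  have zk: "norm z ^ k \<le> 1" for k using nz by (simp add: power_le_one)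
  define xa where "xa j k = complex_of_real (t j) * (acoef (Ah j) k * z^k)" for j k
  define Ma where "Ma j k = t j * ((if k = 1 then 1 else 0) + Ah j k)" for j k
  have Ma_sum: "(\<lambda>k. Ma j k) sums (t j * (1 + suminf (Ah j)))" for j
    unfolding Ma_def using sums_mult[OF sums_add[OF sums_single[of 1 "\<lambda>_. (1::real)"] summable_sums[OF gb(3)[of j]]], of "t j"]
    by simp
  have eqa: "(\<Sum>j. \<Sum>k. xa j k) = (\<Sum>k. \<Sum>j. xa j k)"
  proof (rule SwapEq)
    show "norm (xa j k) \<le> Ma j k" for j k
    proof -
      have "norm (acoef (Ah j) k) \<le> (if k = 1 then 1 else 0) + Ah j k" using f(1)[of j k] f(4)[of j] by (auto simp: acoef_def)
      then have "norm (acoef (Ah j) k * z^k) \<le> (if k = 1 then 1 else 0) + Ah j k"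
        using norm_cz[OF nz, of "acoef (Ah j) k" k] by linarith
      then show ?thesis unfolding xa_def Ma_def using t(1)[of j] by (simp add: norm_mult mult_left_mono)
    qed
    show "summable (Ma j)" for j using Ma_sum[of j] by (simp add: sums_iff)
    show "summable (\<lambda>j. \<Sum>k. Ma j k)"
    proof -
      have "(\<Sum>k. Ma j k) = t j * (1 + suminf (Ah j))" for j using Ma_sum[of j] by (simp add: sums_iff)
      moreover have "summable (\<lambda>j. t j * (1 + suminf (Ah j)))"
        by (rule summable_comparison_test[OF _ summable_mult2[OF st(1), of 2]])
           (use t gb in \<open>auto intro!: exI[of _ 0] simp: abs_mult mult_left_mono abs_of_nonneg suminf_nonneg f\<close>)
      ultimately show ?thesis by simp
    qed
  qed
  have inA: "(\<Sum>k. xa j k) = complex_of_real (t j) * ps (acoef (Ah j)) z" for j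
    unfolding xa_def ps_def using ps_norm_le(1)[OF g z] by (simp add: suminf_mult)
  have inA2: "(\<Sum>j. xa j k) = acoef Ac k * z^k" for k
  proof -
    have "(\<lambda>j. t j * ((if k = 1 then 1 else 0) - Ah j k)) sums ((if k = 1 then 1 else 0) - Ac k)"
      using sums_diff[OF sums_mult2[OF t(2), of "if k = 1 then 1 else 0"] summable_sums[OF sA[of k]]]
      by (simp add: Ac_def algebra_simps)
    then have "(\<lambda>j. complex_of_real (t j * ((if k = 1 then 1 else 0) - Ah j k))) sums complex_of_real ((if k = 1 then 1 else 0) - Ac k)"
      by (simp only: sums_of_real_iff)
    then have "(\<lambda>j. complex_of_real (t j * ((if k = 1 then 1 else 0) - Ah j k)) * z^k) sums (complex_of_real ((if k = 1 then 1 else 0) - Ac k) * z^k)"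
      by (rule sums_mult2)
    moreover have "(\<lambda>j. complex_of_real (t j * ((if k = 1 then 1 else 0) - Ah j k)) * z^k) = (\<lambda>j. xa j k)"
      by (rule ext) (simp add: xa_def acoef_def)
    ultimately show ?thesis by (simp add: sums_iff acoef_def)
  qed
  have PA: "(\<Sum>j. complex_of_real (t j) * ps (acoef (Ah j)) z) = ps (acoef Ac) z"
    using eqa inA inA2 by (simp add: ps_def)
  define xb where "xb j k = complex_of_real (t j) * (bcoef (Bh j) k * z^k)" for j k
  define Mb where "Mb j k = t j * Bh j k" for j k
  have eqb: "(\<Sum>j. \<Sum>k. xb j k) = (\<Sum>k. \<Sum>j. xb j k)"
  proof (rule SwapEq)
    show "norm (xb j k) \<le> Mb j k" for j k
      unfolding xb_def Mb_def using zk[of k] f(2)[of j k] t(1)[of j]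
      by (simp add: bcoef_def norm_mult norm_sg norm_power mult_left_le mult_left_mono)
    show "summable (Mb j)" for j unfolding Mb_def using gb(4)[of j] by (rule summable_mult)
    show "summable (\<lambda>j. \<Sum>k. Mb j k)"
    proof -
      have "(\<Sum>k. Mb j k) = t j * suminf (Bh j)" for j unfolding Mb_def using gb(4)[of j] by (simp add: suminf_mult)
      moreover have "summable (\<lambda>j. t j * suminf (Bh j))"
        by (rule summable_comparison_test[OF _ st(1)])
           (use t gb in \<open>auto intro!: exI[of _ 0] simp: abs_mult mult_left_le abs_of_nonneg suminf_nonneg f\<close>)
      ultimately show ?thesis by simp
    qed
  qed
  have inB: "(\<Sum>k. xb j k) = complex_of_real (t j) * ps (bcoef (Bh j)) z" for j
    unfolding xb_def ps_def using ps_norm_le(3)[OF g z] by (simp add: suminf_mult)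
  have inB2: "(\<Sum>j. xb j k) = bcoef Bc k * z^k" for k
  proof -
    have "(\<lambda>j. complex_of_real (t j * Bh j k)) sums complex_of_real (Bc k)"
      using summable_sums[OF sB[of k]] by (simp only: sums_of_real_iff Bc_def)
    then have "(\<lambda>j. sg * (complex_of_real (t j * Bh j k) * z^k)) sums (sg * (complex_of_real (Bc k) * z^k))"
      by (intro sums_mult sums_mult2)
    moreover have "(\<lambda>j. sg * (complex_of_real (t j * Bh j k) * z^k)) = (\<lambda>j. xb j k)"
      by (rule ext) (simp add: xb_def bcoef_def)
    ultimately show ?thesis by (simp add: sums_iff bcoef_def)
  qed
  have PB: "(\<Sum>j. complex_of_real (t j) * ps (bcoef (Bh j)) z) = ps (bcoef Bc) z"
    using eqb inB inB2 by (simp add: ps_def)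
  have s1: "summable (\<lambda>j. complex_of_real (t j) * ps (acoef (Ah j)) z)"
    by (rule summable_comparison_test[OF _ summable_mult2[OF st(1), of 2]])
       (use t ps_norm_le(2)[OF g z] in \<open>auto intro!: exI[of _ 0] simp: norm_mult mult_left_mono mult.commute\<close>)
  have s2: "summable (\<lambda>j. complex_of_real (t j) * ps (bcoef (Bh j)) z)"
    by (rule summable_comparison_test[OF _ st(1)])
       (use t ps_norm_le(4)[OF g z] in \<open>auto intro!: exI[of _ 0] simp: norm_mult mult_left_le\<close>)
  have "(\<lambda>j. complex_of_real (t j) * (ps (acoef (Ah j)) z + cnj (ps (bcoef (Bh j)) z))) sums
        (ps (acoef Ac) z + cnj (ps (bcoef Bc) z))"
  proof -
    have "(\<lambda>j. complex_of_real (t j) * ps (acoef (Ah j)) z) sums ps (acoef Ac) z"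
      using summable_sums[OF s1] PA by simp
    moreover have "(\<lambda>j. cnj (complex_of_real (t j) * ps (bcoef (Bh j)) z)) sums cnj (ps (bcoef Bc) z)"
      using sums_cnj[THEN iffD2, OF summable_sums[OF s2]] PB by simp
    ultimately have "(\<lambda>j. complex_of_real (t j) * ps (acoef (Ah j)) z + cnj (complex_of_real (t j) * ps (bcoef (Bh j)) z))
        sums (ps (acoef Ac) z + cnj (ps (bcoef Bc) z))" by (rule sums_add)
    then show ?thesis by (simp add: algebra_simps)
  qed
  then show "(\<Sum>j. complex_of_real (t j) * (ps (acoef (Ah j)) z + cnj (ps (bcoef (Bh j)) z)))
          = ps (acoef (\<lambda>k. \<Sum>j. t j * Ah j k)) z + cnj (ps (bcoef (\<lambda>k. \<Sum>j. t j * Bh j k)) z)"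
    unfolding Ac_def Bc_def by (simp add: sums_iff)
qed

end


lemma powdiff:
  fixes z1 z2 :: complex
  assumes "norm z1 \<le> \<rho>" "norm z2 \<le> \<rho>" "\<rho> > 0"
  shows "norm (z1^k - z2^k) \<le> real k * \<rho>^(k-1) * norm (z1 - z2)"
proof (cases k)
  case 0 then show ?thesis by simp
next
  case (Suc j)
  define w1 where "w1 = z1 / of_real \<rho>"
  define w2 where "w2 = z2 / of_real \<rho>"
  have n1: "norm w1 \<le> 1" "norm w2 \<le> 1" using assms by (auto simp: w1_def w2_def norm_divide)
  have z: "z1 = of_real \<rho> * w1" "z2 = of_real \<rho> * w2" using assms by (auto simp: w1_def w2_def)
  have "norm (z1^k - z2^k) = \<rho>^k * norm (w1^k - w2^k)"
    using assms by (simp add: z power_mult_distrib norm_mult norm_power right_diff_distrib[symmetric])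
  also have "\<dots> \<le> \<rho>^k * (real k * norm (w1 - w2))"
    using norm_power_diff[OF n1, of k] assms by (intro mult_left_mono) auto
  also have "norm (w1 - w2) = norm (z1 - z2) / \<rho>"
    using assms by (simp add: w1_def w2_def diff_divide_distrib[symmetric] norm_divide)
  also have "\<rho>^k * (real k * (norm (z1 - z2) / \<rho>)) = real k * \<rho>^(k-1) * norm (z1 - z2)"
    using assms Suc by (simp add: field_simps)
  finally show ?thesis .
qed

lemma re_key:
  fixes N D X Y :: complex and eta d :: real
  assumes e1: "N - of_real eta * D = of_real d * (X - Y)" and e2: "D = X + Y"
    and lt: "norm Y < norm X" and d: "d > 0"
  shows "Re (N / D) > eta"
proof -
  have Dnz: "D \<noteq> 0"
  proof
    assume "D = 0"
    then have "X = - Y" using e2 by (simp add: eq_neg_iff_add_eq_0)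
    then show False using lt by simp
  qed
  have kx: "(cmod X)^2 = (Re X)^2 + (Im X)^2" "(cmod Y)^2 = (Re Y)^2 + (Im Y)^2" by (simp_all add: cmod_power2)
  have key: "Re ((X - Y) * cnj (X + Y)) = (cmod X)^2 - (cmod Y)^2"
    unfolding kx by (simp add: algebra_simps power2_eq_square)
  have pos: "(cmod X)^2 - (cmod Y)^2 > 0" using lt by (simp add: power_strict_mono)
  have "N = of_real eta * D + of_real d * (X - Y)" using e1 by (simp add: algebra_simps)
  define W where "W = (X - Y) / D"
  have "N / D = (of_real eta * D + of_real d * (X - Y)) / D" using \<open>N = _\<close> by simp
  also have "\<dots> = of_real eta + of_real d * W" using Dnz by (simp add: add_divide_distrib W_def)
  finally have "Re (N / D) = Re (of_real eta + of_real d * W)" by simp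
  then have eqRe: "Re (N / D) = eta + d * Re ((X - Y) / D)" by (simp add: W_def[symmetric])
  have "Re ((X - Y) / D) = Re ((X - Y) * cnj D) / (cmod D)^2"
    by (subst complex_div_cnj) (simp add: Re_divide_of_real)
  moreover have "Re ((X - Y) * cnj D) / (cmod D)^2 > 0"
    using key pos Dnz e2 by simp
  ultimately have q: "Re ((X - Y) / D) > 0" by simp
  have "d * Re ((X - Y) / D) > 0" by (rule mult_pos_pos[OF d q])
  then show ?thesis using eqRe by linarith
qed

lemma alg_e:
  fixes N D z Am An Bm Bn P2 Q2 et ep L :: complex
  assumes L: "L = 1 - et" "et \<noteq> 1" and N: "N = z - Am - Bm" and D: "D = z - An + ep * Bn"
    and P2: "P2 = Am + (1 - 2*et) * An + Bm - ((1 - 2*et) * ep) * Bn" and Q2: "Q2 = Am - An + Bm + ep * Bn"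
  shows "N - et * D = L * ((z - P2/(2*L)) - Q2/(2*L))" "D = (z - P2/(2*L)) + Q2/(2*L)"
proof -
  have L0: "L \<noteq> 0" using L by auto
  have "L * ((z - P2/(2*L)) - Q2/(2*L)) = L * z - (P2 + Q2) / 2" using L0 by (simp add: field_simps)
  also have "\<dots> = N - et * D" unfolding N D P2 Q2 L(1) by (simp add: field_simps)
  finally show "N - et * D = L * ((z - P2/(2*L)) - Q2/(2*L))" ..
  have "(z - P2/(2*L)) + Q2/(2*L) = z - (P2 - Q2) / (2*L)" by (simp add: diff_divide_distrib)
  also have "P2 - Q2 = 2 * L * (An - ep * Bn)" unfolding P2 Q2 L(1) by (simp add: algebra_simps)
  also have "z - 2 * L * (An - ep * Bn) / (2 * L) = D" using L0 unfolding D by simp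
  finally show "D = (z - P2/(2*L)) + Q2/(2*L)" ..
qed
lemma norm_ofr: "norm (complex_of_real x * w^k) = \<bar>x\<bar> * norm w ^ k"
  by (simp add: norm_mult norm_power)

context SHL
begin

lemma Cr_bound:
  assumes r: "r \<in> {m, n}" and x: "x \<ge> 0"
  shows "C r k * x \<le> e k * x / (1 - eta)" "C r k * x \<le> e' k * x / (1 - eta)"
proof -
  have "C r k \<le> C m k" using r Cnm by auto
  then have "(1 - eta) * (C r k * x) \<le> (1 - eta) * (C m k * x)" using eta x by (intro mult_left_mono mult_right_mono) auto
  then have a: "(1 - eta) * (C r k * x) \<le> e k * x" "(1 - eta) * (C r k * x) \<le> e' k * x"
    using e_ge[of k] e'_ge[of k] x by (smt (verit) mult.assoc mult_right_mono)+
  show "C r k * x \<le> e k * x / (1 - eta)" "C r k * x \<le> e' k * x / (1 - eta)"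
    using a eta by (simp_all add: field_simps)
qed

lemma Suf:
  assumes g: "good Ah Bh"
  shows "SHbar al be ga de p q m n eta (\<lambda>z. ps (acoef Ah) z + cnj (ps (bcoef Bh) z))"
proof -
  note f = good_facts[OF g] and gb = good_bounds[OF g]
  define a where "a = acoef Ah"
  define b where "b = bcoef Bh"
  define F where "F = (\<lambda>z. ps a z + cnj (ps b z))"
  define v where "v k = real k * (Ah k + Bh k)" for k
  have v: "\<And>k. v k \<ge> 0" "summable v" "v 0 = 0" "suminf v \<le> 1" "v 1 < 1"
    using f gb unfolding v_def by auto
  have Gv: "summable (\<lambda>k. v (Suc k) * r^k) \<and> (\<Sum>k. v (Suc k) * r^k) < 1" if "0 \<le> r" "r < 1" for r
    by (rule Gsum[OF v that])
  have wR_nn: "wR Ah Bh k \<ge> 0" for k using f e_nn e'_nn by (simp add: wR_def)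
  have GR: "summable (\<lambda>k. wR Ah Bh (Suc k) * r^k) \<and> (\<Sum>k. wR Ah Bh (Suc k) * r^k) < 1 - eta" if "0 \<le> r" "r < 1" for r
    by (rule Gsum[OF wR_nn f(8) _ f(9) f(10) that]) (use f in \<open>simp add: wR_def\<close>)
  have na: "norm (a k) \<le> (if k = 1 then 1 else 0) + Ah k" for k using f(1)[of k] f(4) by (auto simp: a_def acoef_def)
  have nb: "norm (b k) = Bh k" for k using f(2)[of k] by (simp add: b_def bcoef_def norm_mult norm_sg)
  have a01: "a 0 = 0" "a 1 = 1" "b 0 = 0" using f by (auto simp: a_def b_def acoef_def bcoef_def)
  have b1: "cmod (b 1) < 1" using nb[of 1] gb(9) by simp
  have summ: "summable (\<lambda>k. a k * z ^ k) \<and> summable (\<lambda>k. b k * z ^ k) \<and>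
           (\<forall>r\<in>{m, n}. summable (\<lambda>k. complex_of_real (C r k) * a k * z ^ k) \<and>
                        summable (\<lambda>k. complex_of_real (C r k) * b k * z ^ k))" if z: "z \<in> U" for z
  proof (intro conjI ballI)
    have nz: "norm z < 1" using z by (simp add: U_def)
    show "summable (\<lambda>k. a k * z ^ k)" "summable (\<lambda>k. b k * z ^ k)"
      using ps_norm_le[OF g z] by (simp_all add: a_def b_def)
    fix r assume r: "r \<in> {m, n}"
    have s1: "summable (\<lambda>k. (if k = 1 then 1 else 0) + wR Ah Bh k / (1 - eta))"
      by (rule summable_add[OF summable_finite[of "{1}"] summable_divide[OF f(8)]]) auto
    have s2: "summable (\<lambda>k. wR Ah Bh k / (1 - eta))" using f(8) by (intro summable_divide)
    show "summable (\<lambda>k. complex_of_real (C r k) * a k * z ^ k)"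
    proof (rule summable_comparison_test[OF _ s1], intro exI allI impI)
      fix k
      have "norm (complex_of_real (C r k) * a k * z ^ k) \<le> norm (complex_of_real (C r k) * a k)"
        using norm_cz[OF nz] by simp
      also have "\<dots> = C r k * norm (a k)" using C_pos[of r k] by (simp add: norm_mult)
      also have "\<dots> \<le> C r k * ((if k = 1 then 1 else 0) + Ah k)" using na C_pos[of r k] by (intro mult_left_mono) auto
      also have "\<dots> \<le> (if k = 1 then 1 else 0) + wR Ah Bh k / (1 - eta)"
      proof (cases "k = 1")
        case True then show ?thesis using f wR_nn[of 1] eta by (simp add: C_le1)
      next
        case False
        have "C r k * Ah k \<le> e k * Ah k / (1 - eta)" by (rule Cr_bound(1)[OF r f(1)])
        also have "\<dots> \<le> wR Ah Bh k / (1 - eta)" using eta f(2)[of k] e'_nn[of k]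
          by (intro divide_right_mono) (auto simp: wR_def)
        finally show ?thesis using False by simp
      qed
      finally show "norm (complex_of_real (C r k) * a k * z ^ k) \<le> (if k = 1 then 1 else 0) + wR Ah Bh k / (1 - eta)" .
    qed
    show "summable (\<lambda>k. complex_of_real (C r k) * b k * z ^ k)"
    proof (rule summable_comparison_test[OF _ s2], intro exI allI impI)
      fix k
      have "norm (complex_of_real (C r k) * b k * z ^ k) \<le> norm (complex_of_real (C r k) * b k)"
        using norm_cz[OF nz] by simp
      also have "\<dots> = C r k * Bh k" using C_pos[of r k] nb by (simp add: norm_mult)
      also have "\<dots> \<le> e' k * Bh k / (1 - eta)" by (rule Cr_bound(2)[OF r f(2)])
      also have "\<dots> \<le> wR Ah Bh k / (1 - eta)" using eta f(1)[of k] e_nn[of k]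
        by (intro divide_right_mono) (auto simp: wR_def)
      finally show "norm (complex_of_real (C r k) * b k * z ^ k) \<le> wR Ah Bh k / (1 - eta)" .
    qed
  qed
  have sa: "\<And>z. norm z < 1 \<Longrightarrow> summable (\<lambda>k. a k * z^k)" using summ by (simp add: U_def)
  have sb: "\<And>z. norm z < 1 \<Longrightarrow> summable (\<lambda>k. b k * z^k)" using summ by (simp add: U_def)
  have inj: "inj_on F U"
  proof (rule inj_onI, rule ccontr)
    fix z1 z2 assume z1: "z1 \<in> U" and z2: "z2 \<in> U" and Feq: "F z1 = F z2" and ne: "z1 \<noteq> z2"
    define \<rho> where "\<rho> = max (norm z1) (norm z2)"
    have \<rho>: "0 < \<rho>" "\<rho> < 1" "norm z1 \<le> \<rho>" "norm z2 \<le> \<rho>"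
      using z1 z2 ne by (auto simp: \<rho>_def U_def max_def)
    define d where "d = norm (z1 - z2)"
    have d: "d > 0" using ne by (simp add: d_def)
    define Dk where "Dk k = z1^k - z2^k" for k
    have nD: "norm (Dk k) \<le> real k * \<rho>^(k-1) * d" for k unfolding Dk_def d_def by (rule powdiff[OF \<rho>(3,4,1)])
    define g where "g k = v k * \<rho>^(k-1)" for k
    have sg1: "summable (\<lambda>k. g (Suc k))" using Gv[of \<rho>] \<rho> by (simp add: g_def)
    have sgg: "summable g" using sg1 by (simp add: summable_Suc_iff)
    have g0: "g 0 = 0" using v by (simp add: g_def)
    have gsum: "suminf g < 1"
      using suminf_split_head[OF sgg] g0 Gv[of \<rho>] \<rho> by (simp add: g_def)
    have bA: "norm (complex_of_real (Ah k) * Dk k) \<le> Ah k * (real k * \<rho>^(k-1)) * d" for k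
      using nD[of k] f(1)[of k] by (simp add: norm_mult mult_left_mono mult.assoc)
    have bB: "norm (complex_of_real (Bh k) * Dk k) \<le> Bh k * (real k * \<rho>^(k-1)) * d" for k
      using nD[of k] f(2)[of k] by (simp add: norm_mult mult_left_mono mult.assoc)
    have sgA: "summable (\<lambda>k. Ah k * (real k * \<rho>^(k-1)) * d)"
      by (rule summable_comparison_test[OF _ summable_mult2[OF sgg, of d]])
         (use f \<rho> d in \<open>auto intro!: exI[of _ 0] mult_right_mono simp: g_def v_def abs_mult algebra_simps\<close>)
    have sgB: "summable (\<lambda>k. Bh k * (real k * \<rho>^(k-1)) * d)"
      by (rule summable_comparison_test[OF _ summable_mult2[OF sgg, of d]])
         (use f \<rho> d in \<open>auto intro!: exI[of _ 0] mult_right_mono simp: g_def v_def abs_mult algebra_simps\<close>)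
    have sAD: "summable (\<lambda>k. complex_of_real (Ah k) * Dk k)"
      by (rule summable_comparison_test[OF _ sgA]) (use bA in auto)
    have sBD: "summable (\<lambda>k. complex_of_real (Bh k) * Dk k)"
      by (rule summable_comparison_test[OF _ sgB]) (use bB in auto)
    define SA where "SA = (\<Sum>k. complex_of_real (Ah k) * Dk k)"
    define SB where "SB = (\<Sum>k. complex_of_real (Bh k) * Dk k)"
    have nSA: "norm SA \<le> (\<Sum>k. Ah k * (real k * \<rho>^(k-1)) * d)" unfolding SA_def by (rule norm_suminf_le[OF bA sgA])
    have nSB: "norm SB \<le> (\<Sum>k. Bh k * (real k * \<rho>^(k-1)) * d)" unfolding SB_def by (rule norm_suminf_le[OF bB sgB])
    have "(\<Sum>k. Ah k * (real k * \<rho>^(k-1)) * d) + (\<Sum>k. Bh k * (real k * \<rho>^(k-1)) * d) = (\<Sum>k. g k * d)"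
    proof -
      have "(\<Sum>k. Ah k * (real k * \<rho>^(k-1)) * d) + (\<Sum>k. Bh k * (real k * \<rho>^(k-1)) * d)
          = (\<Sum>k. Ah k * (real k * \<rho>^(k-1)) * d + Bh k * (real k * \<rho>^(k-1)) * d)"
        by (rule suminf_add[OF sgA sgB])
      also have "\<dots> = (\<Sum>k. g k * d)" by (simp add: g_def v_def algebra_simps)
      finally show ?thesis .
    qed
    also have "(\<Sum>k. g k * d) = suminf g * d" by (rule suminf_mult2[OF sgg, symmetric])
    also have "\<dots> < d" using gsum d by simp
    finally have small: "norm SA + norm SB < d" using nSA nSB by linarith
    have pa: "ps a z1 - ps a z2 = (z1 - z2) - SA"
    proof -
      have "(\<lambda>k. a k * z1^k - a k * z2^k) sums (ps a z1 - ps a z2)"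
        unfolding ps_def using sa[of z1] sa[of z2] z1 z2 by (intro sums_diff summable_sums) (auto simp: U_def)
      moreover have "(\<lambda>k. a k * z1^k - a k * z2^k) = (\<lambda>k. (if k = 1 then z1 - z2 else 0) - complex_of_real (Ah k) * Dk k)"
        using f by (auto simp: a_def acoef_def Dk_def algebra_simps)
      moreover have "(\<lambda>k. (if k = 1 then z1 - z2 else 0) - complex_of_real (Ah k) * Dk k) sums ((z1 - z2) - SA)"
        unfolding SA_def using sums_single[of 1 "\<lambda>_. z1 - z2"] sAD by (intro sums_diff summable_sums) auto
      ultimately show ?thesis using sums_unique2 by metis
    qed
    have pb: "ps b z1 - ps b z2 = sg * SB"
    proof -
      have "(\<lambda>k. b k * z1^k - b k * z2^k) sums (ps b z1 - ps b z2)"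
        unfolding ps_def using sb[of z1] sb[of z2] z1 z2 by (intro sums_diff summable_sums) (auto simp: U_def)
      moreover have "(\<lambda>k. b k * z1^k - b k * z2^k) = (\<lambda>k. sg * (complex_of_real (Bh k) * Dk k))"
        by (auto simp: b_def bcoef_def Dk_def algebra_simps)
      moreover have "(\<lambda>k. sg * (complex_of_real (Bh k) * Dk k)) sums (sg * SB)"
        unfolding SB_def using sBD by (intro sums_mult summable_sums)
      ultimately show ?thesis using sums_unique2 by metis
    qed
    have "0 = F z1 - F z2" using Feq by simp
    also have "\<dots> = (ps a z1 - ps a z2) + cnj (ps b z1 - ps b z2)" by (simp add: F_def)
    also have "\<dots> = (z1 - z2) - SA + cnj (sg * SB)" using pa pb by simp
    finally have "z1 - z2 = SA - cnj (sg * SB)" by (simp add: algebra_simps)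
    then have "d = norm (SA - cnj (sg * SB))" by (simp add: d_def)
    also have "\<dots> \<le> norm SA + norm SB" using norm_triangle_ineq4[of SA "cnj (sg * SB)"] by (simp add: norm_mult norm_sg)
    finally show False using small by simp
  qed
  have spres: "cmod (deriv (ps b) z) < cmod (deriv (ps a) z)" if z: "z \<in> U" for z
  proof -
    have nz: "norm z < 1" using z by (simp add: U_def)
    define \<rho> where "\<rho> = norm z"
    have \<rho>: "0 \<le> \<rho>" "\<rho> < 1" using nz by (auto simp: \<rho>_def)
    have psa: "ps a = (\<lambda>z. \<Sum>k. a k * z^k)" by (rule ext) (simp add: ps_def)
    have psb: "ps b = (\<lambda>z. \<Sum>k. b k * z^k)" by (rule ext) (simp add: ps_def)
    have da: "deriv (ps a) z = (\<Sum>k. diffs a k * z^k)"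
      unfolding psa by (rule DERIV_imp_deriv, rule termdiffs_strong'[of 1]) (use sa nz in auto)
    have db: "deriv (ps b) z = (\<Sum>k. diffs b k * z^k)"
      unfolding psb by (rule DERIV_imp_deriv, rule termdiffs_strong'[of 1]) (use sb nz in auto)
    have bdA: "norm (complex_of_real (real (Suc k) * Ah (Suc k)) * z^k) \<le> real (Suc k) * Ah (Suc k) * \<rho>^k" for k
      using f(1)[of "Suc k"] norm_ofr[of "real (Suc k) * Ah (Suc k)" z k] by (simp add: \<rho>_def)
    have bdB: "norm (complex_of_real (real (Suc k) * Bh (Suc k)) * z^k) \<le> real (Suc k) * Bh (Suc k) * \<rho>^k" for k
      using f(2)[of "Suc k"] norm_ofr[of "real (Suc k) * Bh (Suc k)" z k] by (simp add: \<rho>_def)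
    have sv: "summable (\<lambda>k. v (Suc k) * \<rho>^k)" using Gv[OF \<rho>] by simp
    have sRA: "summable (\<lambda>k. real (Suc k) * Ah (Suc k) * \<rho>^k)"
      by (rule summable_comparison_test[OF _ sv]) (use f \<rho> in \<open>auto intro!: exI[of _ 0] mult_right_mono simp: v_def abs_mult algebra_simps\<close>)
    have sRB: "summable (\<lambda>k. real (Suc k) * Bh (Suc k) * \<rho>^k)"
      by (rule summable_comparison_test[OF _ sv]) (use f \<rho> in \<open>auto intro!: exI[of _ 0] mult_right_mono simp: v_def abs_mult algebra_simps\<close>)
    have sXA: "summable (\<lambda>k. complex_of_real (real (Suc k) * Ah (Suc k)) * z^k)"
      by (rule summable_comparison_test[OF _ sRA]) (use bdA in auto)
    have sXB: "summable (\<lambda>k. complex_of_real (real (Suc k) * Bh (Suc k)) * z^k)"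
      by (rule summable_comparison_test[OF _ sRB]) (use bdB in auto)
    define XA where "XA = (\<Sum>k. complex_of_real (real (Suc k) * Ah (Suc k)) * z^k)"
    define XB where "XB = (\<Sum>k. complex_of_real (real (Suc k) * Bh (Suc k)) * z^k)"
    have nXA: "norm XA \<le> (\<Sum>k. real (Suc k) * Ah (Suc k) * \<rho>^k)" unfolding XA_def by (rule norm_suminf_le[OF bdA sRA])
    have nXB: "norm XB \<le> (\<Sum>k. real (Suc k) * Bh (Suc k) * \<rho>^k)" unfolding XB_def by (rule norm_suminf_le[OF bdB sRB])
    have "(\<Sum>k. real (Suc k) * Ah (Suc k) * \<rho>^k) + (\<Sum>k. real (Suc k) * Bh (Suc k) * \<rho>^k) = (\<Sum>k. v (Suc k) * \<rho>^k)"
      using suminf_add[OF sRA sRB] by (simp add: v_def algebra_simps)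
    then have small: "norm XA + norm XB < 1" using nXA nXB Gv[OF \<rho>] by linarith
    have "(\<lambda>k. diffs a k * z^k) sums (1 - XA)"
    proof -
      have "(\<lambda>k. (if k = 0 then 1 else 0) - complex_of_real (real (Suc k) * Ah (Suc k)) * z^k) sums (1 - XA)"
        unfolding XA_def using sums_single[of 0 "\<lambda>_. (1::complex)"] sXA by (intro sums_diff summable_sums) auto
      moreover have "(\<lambda>k. (if k = 0 then 1 else 0) - complex_of_real (real (Suc k) * Ah (Suc k)) * z^k) = (\<lambda>k. diffs a k * z^k)"
        using f by (auto simp: diffs_def a_def acoef_def algebra_simps)
      ultimately show ?thesis by simp
    qed
    then have DA: "deriv (ps a) z = 1 - XA" using da by (simp add: sums_iff)
    have "(\<lambda>k. diffs b k * z^k) sums (sg * XB)"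
    proof -
      have "(\<lambda>k. sg * (complex_of_real (real (Suc k) * Bh (Suc k)) * z^k)) sums (sg * XB)"
        unfolding XB_def using sXB by (intro sums_mult summable_sums)
      moreover have "(\<lambda>k. sg * (complex_of_real (real (Suc k) * Bh (Suc k)) * z^k)) = (\<lambda>k. diffs b k * z^k)"
        by (auto simp: diffs_def b_def bcoef_def algebra_simps)
      ultimately show ?thesis by simp
    qed
    then have DB: "deriv (ps b) z = sg * XB" using db by (simp add: sums_iff)
    have "cmod (deriv (ps b) z) = norm XB" using DB by (simp add: norm_mult norm_sg)
    also have "\<dots> < 1 - norm XA" using small by simp
    also have "\<dots> \<le> cmod (deriv (ps a) z)" using DA norm_triangle_ineq2[of 1 XA] by simp
    finally show ?thesis .
  qed
  have recond: "Re (Phi_harm al be ga de p q m a b z / Phi_harm al be ga de p q n a b z) > eta"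
    if z: "z \<in> U - {0}" for z
  proof -
    have zU: "z \<in> U" and z0: "z \<noteq> 0" using z by auto
    have nz: "norm z < 1" using z by (simp add: U_def)
    define \<rho> where "\<rho> = norm z"
    have \<rho>: "0 < \<rho>" "\<rho> < 1" using nz z0 by (auto simp: \<rho>_def)
    have bnd: "norm (complex_of_real (C r k * X k) * w ^ k) \<le> wR Ah Bh k / (1 - eta) * \<rho>^k"
      if r: "r \<in> {m, n}" and X: "X = Ah \<or> X = Bh" and w: "norm w = \<rho>" for r k X w
    proof -
      have cx: "C r k * X k \<le> wR Ah Bh k / (1 - eta)"
      proof (cases "X = Ah")
        case True
        have "C r k * X k \<le> e k * Ah k / (1 - eta)" using Cr_bound(1)[OF r f(1)] True by simp
        also have "\<dots> \<le> wR Ah Bh k / (1 - eta)" using eta f(2)[of k] e'_nn[of k]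
          by (intro divide_right_mono) (auto simp: wR_def)
        finally show ?thesis .
      next
        case False then have XB: "X = Bh" using X by auto
        have "C r k * X k \<le> e' k * Bh k / (1 - eta)" using Cr_bound(2)[OF r f(2)] XB by simp
        also have "\<dots> \<le> wR Ah Bh k / (1 - eta)" using eta f(1)[of k] e_nn[of k]
          by (intro divide_right_mono) (auto simp: wR_def)
        finally show ?thesis .
      qed
      have nn0: "C r k * X k \<ge> 0" using X f C_pos[of r k] by auto
      have eqn: "norm (complex_of_real (C r k * X k) * w ^ k) = (C r k * X k) * \<rho>^k"
        using norm_ofr[of "C r k * X k" w k] nn0 w by (simp only: abs_of_nonneg)
      have "(C r k * X k) * \<rho>^k \<le> wR Ah Bh k / (1 - eta) * \<rho>^k" using cx \<rho> by (intro mult_right_mono) auto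
      then show ?thesis using eqn by linarith
    qed
    have swr: "summable (\<lambda>k. wR Ah Bh k / (1 - eta) * \<rho>^k)"
    proof -
      have "summable (\<lambda>k. wR Ah Bh (Suc k) * \<rho>^k)" using GR[of \<rho>] \<rho> by simp
      then have "summable (\<lambda>k. wR Ah Bh (Suc k) * \<rho>^(Suc k))" using summable_mult2[of _ \<rho>] by (simp add: mult.assoc mult.commute)
      then have "summable (\<lambda>k. wR Ah Bh k * \<rho>^k)" using summable_Suc_iff[of "\<lambda>k. wR Ah Bh k * \<rho>^k"] by simp
      then show ?thesis using summable_divide[of _ "1 - eta"] by (simp add: field_simps)
    qed
    have ser: "summable (\<lambda>k. complex_of_real (C r k * X k) * w ^ k)"
      if "r \<in> {m, n}" "X = Ah \<or> X = Bh" "norm w = \<rho>" for r X w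
      by (rule summable_comparison_test[OF _ swr]) (use bnd[OF that] in auto)
    define SA where "SA r = (\<Sum>k. complex_of_real (C r k * Ah k) * z ^ k)" for r
    define SB where "SB r = (\<Sum>k. complex_of_real (C r k * Bh k) * cnj z ^ k)" for r
    have sSA: "r \<in> {m,n} \<Longrightarrow> (\<lambda>k. complex_of_real (C r k * Ah k) * z ^ k) sums SA r" for r
      unfolding SA_def by (rule summable_sums, rule ser) (auto simp: \<rho>_def)
    have sSB: "r \<in> {m,n} \<Longrightarrow> (\<lambda>k. complex_of_real (C r k * Bh k) * cnj z ^ k) sums SB r" for r
      unfolding SB_def by (rule summable_sums, rule ser) (auto simp: \<rho>_def)
    have PA: "Phi_ps al be ga de p q r a z = z - SA r" if r: "r \<in> {m,n}" for r
    proof -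
      have "(\<lambda>k. (if k = 1 then z else 0) - complex_of_real (C r k * Ah k) * z ^ k) sums (z - SA r)"
        using sums_single[of 1 "\<lambda>_. z"] sSA[OF r] by (intro sums_diff) auto
      moreover have "(\<lambda>k. (if k = 1 then z else 0) - complex_of_real (C r k * Ah k) * z ^ k) =
          (\<lambda>k. complex_of_real (C r k) * a k * z ^ k)"
        using f by (auto simp: a_def acoef_def C_le1 algebra_simps)
      ultimately show ?thesis by (simp add: Phi_ps_def sums_iff)
    qed
    have PB: "cnj (Phi_ps al be ga de p q r b z) = sg * SB r" if r: "r \<in> {m,n}" for r
    proof -
      define T where "T = (\<Sum>k. complex_of_real (C r k * Bh k) * z ^ k)"
      have sT: "summable (\<lambda>k. complex_of_real (C r k * Bh k) * z ^ k)" using ser[OF r, of Bh z] by (simp add: \<rho>_def)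
      have "(\<lambda>k. complex_of_real (C r k) * b k * z ^ k) = (\<lambda>k. sg * (complex_of_real (C r k * Bh k) * z ^ k))"
        by (auto simp: b_def bcoef_def algebra_simps)
      then have "Phi_ps al be ga de p q r b z = sg * T"
        unfolding Phi_ps_def T_def using suminf_mult[OF sT, of sg] by simp
      moreover have "cnj T = SB r"
      proof -
        have "(\<lambda>k. cnj (complex_of_real (C r k * Bh k) * z ^ k)) sums cnj T"
          unfolding T_def by (intro sums_cnj[THEN iffD2] summable_sums sT)
        moreover have "(\<lambda>k. cnj (complex_of_real (C r k * Bh k) * z ^ k)) = (\<lambda>k. complex_of_real (C r k * Bh k) * cnj z ^ k)"
          by simp
        ultimately show ?thesis using sSB[OF r] sums_unique2 by metis
      qed
      ultimately show ?thesis using cnj_sg by simp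
    qed
    have HN: "Phi_harm al be ga de p q m a b z = z - SA m - SB m"
      unfolding Phi_harm_def using PA[of m] PB[of m] sgm by (simp add: mult.assoc[symmetric])
    have HD: "Phi_harm al be ga de p q n a b z = z - SA n + complex_of_real ep * SB n"
      unfolding Phi_harm_def using PA[of n] PB[of n] sgn by (simp add: mult.assoc[symmetric])
    define aA where "aA k = C m k + (1 - 2*eta) * C n k" for k
    define aB where "aB k = C m k - (1 - 2*eta) * ep * C n k" for k
    define bA where "bA k = C m k - C n k" for k
    define bB where "bB k = C m k + ep * C n k" for k
    have coefnn: "aA k \<ge> 0" "aB k \<ge> 0" "bA k \<ge> 0" "bB k \<ge> 0" for k
    proof -
      have c: "C n k \<le> C m k" "0 < C n k" "0 < C m k" using Cnm C_pos by auto
      have l1: "(1 - 2*eta) * C n k \<ge> (-1) * C n k" using c eta by (intro mult_right_mono) auto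
      have l2: "(1 - 2*eta) * C n k \<le> 1 * C n k" using c eta by (intro mult_right_mono) auto
      show "aA k \<ge> 0" using c l1 unfolding aA_def by linarith
      show "aB k \<ge> 0" using ep_cases
      proof
        assume "ep = 1" then have "aB k = C m k - (1 - 2*eta) * C n k" by (simp add: aB_def)
        then show ?thesis using c l2 by linarith
      next
        assume "ep = -1" then have "aB k = C m k + (1 - 2*eta) * C n k" by (simp add: aB_def algebra_simps)
        then show ?thesis using c l1 by linarith
      qed
      show "bA k \<ge> 0" using c unfolding bA_def by simp
      show "bB k \<ge> 0" using c ep_cases unfolding bB_def by auto
    qed
    have sumc: "aA k + bA k = 2 * e k" "aB k + bB k = 2 * e' k" for k
      by (simp_all add: aA_def bA_def aB_def bB_def e_def e'_def algebra_simps)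
    define P2 where "P2 = SA m + of_real (1 - 2*eta) * SA n + SB m - of_real ((1 - 2*eta) * ep) * SB n"
    define Q2 where "Q2 = SA m - SA n + SB m + of_real ep * SB n"
    have sP: "(\<lambda>k. complex_of_real (aA k * Ah k) * z^k + complex_of_real (aB k * Bh k) * cnj z^k) sums P2"
    proof -
      have "(\<lambda>k. complex_of_real (C m k * Ah k) * z ^ k + of_real (1 - 2*eta) * (complex_of_real (C n k * Ah k) * z ^ k)
              + complex_of_real (C m k * Bh k) * cnj z ^ k - of_real ((1 - 2*eta) * ep) * (complex_of_real (C n k * Bh k) * cnj z ^ k)) sums P2"
        unfolding P2_def by (intro sums_add sums_diff sums_mult sSA sSB) auto
      moreover have "(\<lambda>k. complex_of_real (C m k * Ah k) * z ^ k + of_real (1 - 2*eta) * (complex_of_real (C n k * Ah k) * z ^ k)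
              + complex_of_real (C m k * Bh k) * cnj z ^ k - of_real ((1 - 2*eta) * ep) * (complex_of_real (C n k * Bh k) * cnj z ^ k))
          = (\<lambda>k. complex_of_real (aA k * Ah k) * z^k + complex_of_real (aB k * Bh k) * cnj z^k)"
        by (rule ext) (simp add: aA_def aB_def algebra_simps)
      ultimately show ?thesis by simp
    qed
    have sQ: "(\<lambda>k. complex_of_real (bA k * Ah k) * z^k + complex_of_real (bB k * Bh k) * cnj z^k) sums Q2"
    proof -
      have "(\<lambda>k. complex_of_real (C m k * Ah k) * z ^ k - complex_of_real (C n k * Ah k) * z ^ k
              + complex_of_real (C m k * Bh k) * cnj z ^ k + of_real ep * (complex_of_real (C n k * Bh k) * cnj z ^ k)) sums Q2"
        unfolding Q2_def by (intro sums_add sums_diff sums_mult sSA sSB) auto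
      moreover have "(\<lambda>k. complex_of_real (C m k * Ah k) * z ^ k - complex_of_real (C n k * Ah k) * z ^ k
              + complex_of_real (C m k * Bh k) * cnj z ^ k + of_real ep * (complex_of_real (C n k * Bh k) * cnj z ^ k))
          = (\<lambda>k. complex_of_real (bA k * Ah k) * z^k + complex_of_real (bB k * Bh k) * cnj z^k)"
        by (rule ext) (simp add: bA_def bB_def algebra_simps)
      ultimately show ?thesis by simp
    qed
    have nP: "norm (complex_of_real (aA k * Ah k) * z^k + complex_of_real (aB k * Bh k) * cnj z^k) \<le> (aA k * Ah k + aB k * Bh k) * \<rho>^k" for k
    proof -
      have "norm (complex_of_real (aA k * Ah k) * z^k + complex_of_real (aB k * Bh k) * cnj z^k)
          \<le> norm (complex_of_real (aA k * Ah k) * z^k) + norm (complex_of_real (aB k * Bh k) * cnj z^k)"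
        by (rule norm_triangle_ineq)
      also have "\<dots> = (aA k * Ah k + aB k * Bh k) * \<rho>^k"
        using coefnn[of k] f(1,2)[of k] by (simp add: norm_mult norm_power \<rho>_def algebra_simps)
      finally show ?thesis .
    qed
    have nQ: "norm (complex_of_real (bA k * Ah k) * z^k + complex_of_real (bB k * Bh k) * cnj z^k) \<le> (bA k * Ah k + bB k * Bh k) * \<rho>^k" for k
    proof -
      have "norm (complex_of_real (bA k * Ah k) * z^k + complex_of_real (bB k * Bh k) * cnj z^k)
          \<le> norm (complex_of_real (bA k * Ah k) * z^k) + norm (complex_of_real (bB k * Bh k) * cnj z^k)"
        by (rule norm_triangle_ineq)
      also have "\<dots> = (bA k * Ah k + bB k * Bh k) * \<rho>^k"
        using coefnn[of k] f(1,2)[of k] by (simp add: norm_mult norm_power \<rho>_def algebra_simps)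
      finally show ?thesis .
    qed
    have sw2: "summable (\<lambda>k. wR Ah Bh k * \<rho>^k)" using summable_mult[OF swr, of "1 - eta"] eta by simp
    have tb: "norm ((x * Ah k + y * Bh k) * \<rho>^k) \<le> 2 * (wR Ah Bh k * \<rho>^k)"
      if "x \<ge> 0" "y \<ge> 0" "x \<le> 2 * e k" "y \<le> 2 * e' k" for x y k
    proof -
      have "x * Ah k \<le> 2 * e k * Ah k" "y * Bh k \<le> 2 * e' k * Bh k"
        using that f(1,2)[of k] by (auto intro: mult_right_mono)
      then have "x * Ah k + y * Bh k \<le> 2 * wR Ah Bh k" by (simp add: wR_def algebra_simps)
      moreover have "x * Ah k + y * Bh k \<ge> 0" using that f(1,2)[of k] by simp
      ultimately have "(x * Ah k + y * Bh k) * \<rho>^k \<le> 2 * wR Ah Bh k * \<rho>^k" using \<rho> by (intro mult_right_mono) auto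
      moreover have "norm ((x * Ah k + y * Bh k) * \<rho>^k) = (x * Ah k + y * Bh k) * \<rho>^k"
        using \<open>x * Ah k + y * Bh k \<ge> 0\<close> \<rho> by simp
      ultimately show ?thesis by simp
    qed
    have sPb: "summable (\<lambda>k. (aA k * Ah k + aB k * Bh k) * \<rho>^k)"
    proof (rule summable_comparison_test[OF _ summable_mult[OF sw2, of 2]], intro exI allI impI)
      fix k show "norm ((aA k * Ah k + aB k * Bh k) * \<rho>^k) \<le> 2 * (wR Ah Bh k * \<rho>^k)"
        using sumc[of k] coefnn[of k] by (intro tb) linarith+
    qed
    have sQb: "summable (\<lambda>k. (bA k * Ah k + bB k * Bh k) * \<rho>^k)"
    proof (rule summable_comparison_test[OF _ summable_mult[OF sw2, of 2]], intro exI allI impI)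
      fix k show "norm ((bA k * Ah k + bB k * Bh k) * \<rho>^k) \<le> 2 * (wR Ah Bh k * \<rho>^k)"
        using sumc[of k] coefnn[of k] by (intro tb) linarith+
    qed
    have nP2: "norm P2 \<le> (\<Sum>k. (aA k * Ah k + aB k * Bh k) * \<rho>^k)"
      using norm_suminf_le[OF nP sPb] sP by (simp add: sums_iff)
    have nQ2: "norm Q2 \<le> (\<Sum>k. (bA k * Ah k + bB k * Bh k) * \<rho>^k)"
      using norm_suminf_le[OF nQ sQb] sQ by (simp add: sums_iff)
    have "(\<Sum>k. (aA k * Ah k + aB k * Bh k) * \<rho>^k) + (\<Sum>k. (bA k * Ah k + bB k * Bh k) * \<rho>^k)
        = (\<Sum>k. 2 * (wR Ah Bh k * \<rho>^k))"
    proof -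
      have "(\<Sum>k. (aA k * Ah k + aB k * Bh k) * \<rho>^k) + (\<Sum>k. (bA k * Ah k + bB k * Bh k) * \<rho>^k)
         = (\<Sum>k. (aA k * Ah k + aB k * Bh k) * \<rho>^k + (bA k * Ah k + bB k * Bh k) * \<rho>^k)"
        by (rule suminf_add[OF sPb sQb])
      also have "\<dots> = (\<Sum>k. 2 * (wR Ah Bh k * \<rho>^k))"
      proof (rule suminf_cong)
        fix k
        have "(aA k * Ah k + aB k * Bh k) * \<rho>^k + (bA k * Ah k + bB k * Bh k) * \<rho>^k
            = ((aA k + bA k) * Ah k + (aB k + bB k) * Bh k) * \<rho>^k" by (simp add: algebra_simps)
        also have "\<dots> = 2 * (wR Ah Bh k * \<rho>^k)" by (simp add: sumc wR_def algebra_simps)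
        finally show "(aA k * Ah k + aB k * Bh k) * \<rho>^k + (bA k * Ah k + bB k * Bh k) * \<rho>^k = 2 * (wR Ah Bh k * \<rho>^k)" .
      qed
      finally show ?thesis .
    qed
    also have "\<dots> = 2 * (\<Sum>k. wR Ah Bh k * \<rho>^k)" by (rule suminf_mult[OF sw2])
    also have "(\<Sum>k. wR Ah Bh k * \<rho>^k) = wR Ah Bh 0 + (\<Sum>k. wR Ah Bh (Suc k) * \<rho>^k) * \<rho>"
      by (rule powser_split_head(1)[OF sw2])
    also have "wR Ah Bh 0 = 0" using f by (simp add: wR_def)
    finally have PQsum: "(\<Sum>k. (aA k * Ah k + aB k * Bh k) * \<rho>^k) + (\<Sum>k. (bA k * Ah k + bB k * Bh k) * \<rho>^k)
        = 2 * ((\<Sum>k. wR Ah Bh (Suc k) * \<rho>^k) * \<rho>)" by simp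
    have "(\<Sum>k. wR Ah Bh (Suc k) * \<rho>^k) * \<rho> < (1 - eta) * \<rho>" using GR[of \<rho>] \<rho> by simp
    then have PQ: "norm P2 + norm Q2 < 2 * (1 - eta) * \<rho>" using nP2 nQ2 PQsum by linarith
    define L where "L = complex_of_real (1 - eta)"
    define P where "P = P2 / (2 * L)"
    define Q where "Q = Q2 / (2 * L)"
    have dpos: "2 * (1 - eta) > 0" using eta by simp
    have nPQ: "norm P + norm Q < \<rho>"
    proof -
      have nL: "norm L = 1 - eta" unfolding L_def norm_of_real using eta by simp
      have nd: "norm (2 * L) = 2 * (1 - eta)" using nL by (simp add: norm_mult)
      have "norm P + norm Q = (norm P2 + norm Q2) / (2 * (1 - eta))"
        unfolding P_def Q_def norm_divide nd by (rule add_divide_distrib[symmetric])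
      also have "\<dots> < \<rho>" using PQ dpos by (simp add: divide_less_eq mult.commute)
      finally show ?thesis .
    qed
    have lt: "norm Q < norm (z - P)"
    proof -
      have "norm z - norm P \<le> norm (z - P)" by (rule norm_triangle_ineq2)
      then show ?thesis using nPQ by (simp add: \<rho>_def)
    qed
    have AE: "Phi_harm al be ga de p q m a b z - of_real eta * Phi_harm al be ga de p q n a b z
        = L * ((z - P2/(2*L)) - Q2/(2*L))"
      "Phi_harm al be ga de p q n a b z = (z - P2/(2*L)) + Q2/(2*L)"
      by (rule alg_e[of L "of_real eta" _ z "SA m" "SB m" _ "SA n" "of_real ep" "SB n"];
          use HN HD eta in \<open>simp add: L_def P2_def Q2_def\<close>)+
    have e1: "Phi_harm al be ga de p q m a b z - of_real eta * Phi_harm al be ga de p q n a b z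
        = of_real (1 - eta) * ((z - P) - Q)" using AE(1) by (simp add: L_def P_def Q_def)
    have e2: "Phi_harm al be ga de p q n a b z = (z - P) + Q" using AE(2) by (simp add: P_def Q_def)
    show ?thesis by (rule re_key[OF e1 e2 lt]) (use eta in simp)
  qed
  have rep: "F z = z - (\<Sum>k. complex_of_real (Ah (k + 2)) * z ^ (k + 2))
                     + cnj ((-1) ^ (m - 1) * (\<Sum>k. complex_of_real (Bh (k + 1)) * z ^ (k + 1)))" if z: "z \<in> U" for z
  proof -
    have nz: "norm z < 1" using z by (simp add: U_def)
    have sAh: "summable (\<lambda>k. complex_of_real (Ah k) * z^k)"
    proof (rule summable_comparison_test[OF _ gb(3)], intro exI allI impI)
      fix k show "norm (complex_of_real (Ah k) * z^k) \<le> Ah k" using norm_cz[OF nz, of "complex_of_real (Ah k)" k] f(1)[of k] by simp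
    qed
    have sBh: "summable (\<lambda>k. complex_of_real (Bh k) * z^k)"
    proof (rule summable_comparison_test[OF _ gb(4)], intro exI allI impI)
      fix k show "norm (complex_of_real (Bh k) * z^k) \<le> Bh k" using norm_cz[OF nz, of "complex_of_real (Bh k)" k] f(2)[of k] by simp
    qed
    have A0: "(\<lambda>k. if k \<ge> 2 then Ah k else 0) = Ah"
    proof (rule ext)
      fix k show "(if k \<ge> 2 then Ah k else 0) = Ah k"
      proof (cases "k \<ge> 2")
        case False then have "k = 0 \<or> k = 1" by auto
        then show ?thesis using f(3,4) by auto
      qed simp
    qed
    have B0: "(\<lambda>k. if k \<ge> 1 then Bh k else 0) = Bh"
    proof (rule ext)
      fix k show "(if k \<ge> 1 then Bh k else 0) = Bh k"
      proof (cases "k \<ge> 1")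
        case False then have "k = 0" by auto
        then show ?thesis using f(5) by auto
      qed simp
    qed
    have shA: "(\<Sum>k. complex_of_real (Ah (k + 2)) * z ^ (k + 2)) = (\<Sum>k. complex_of_real (Ah k) * z^k)"
      using shift_sum(2)[where A=Ah and n=2 and z=z] sAh by (simp add: fun_cong[OF A0])
    have shB: "(\<Sum>k. complex_of_real (Bh (k + 1)) * z ^ (k + 1)) = (\<Sum>k. complex_of_real (Bh k) * z^k)"
    proof -
      have B0': "(if Suc 0 \<le> i then Bh i else 0) = Bh i" for i using fun_cong[OF B0, of i] by simp
      show ?thesis using shift_sum(2)[where A=Bh and n=1 and z=z] sBh by (simp add: B0')
    qed
    have pa: "ps a z = z - (\<Sum>k. complex_of_real (Ah k) * z^k)"
    proof -
      have "(\<lambda>k. (if k = 1 then z else 0) - complex_of_real (Ah k) * z^k) sums (z - (\<Sum>k. complex_of_real (Ah k) * z^k))"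
        using sums_single[of 1 "\<lambda>_. z"] sAh by (intro sums_diff summable_sums) auto
      moreover have "(\<lambda>k. (if k = 1 then z else 0) - complex_of_real (Ah k) * z^k) = (\<lambda>k. a k * z^k)"
        using f by (auto simp: a_def acoef_def algebra_simps)
      ultimately show ?thesis by (simp add: ps_def sums_iff)
    qed
    have pb: "ps b z = sg * (\<Sum>k. complex_of_real (Bh k) * z^k)"
      unfolding ps_def b_def bcoef_def using suminf_mult[OF sBh, of sg] by (simp add: mult.assoc)
    show ?thesis unfolding F_def pa pb shA shB by (simp add: sg_def)
  qed
  have "SH al be ga de p q m n eta F"
    unfolding SH_def
    apply (rule exI[of _ a], rule exI[of _ b])
    using a01 b1 summ F_def inj spres recond by auto
  moreover have "\<exists>A B :: nat \<Rightarrow> real. (\<forall>k. A k \<ge> 0 \<and> B k \<ge> 0) \<and>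
        (\<forall>z\<in>U. F z = z - (\<Sum>k. complex_of_real (A (k + 2)) * z ^ (k + 2))
                     + cnj ((-1) ^ (m - 1) * (\<Sum>k. complex_of_real (B (k + 1)) * z ^ (k + 1))))"
    using rep f by blast
  ultimately show ?thesis unfolding SHbar_def F_def a_def b_def by blast
qed

end


lemma SHbar_cong:
  assumes eq: "\<And>z. z \<in> U \<Longrightarrow> G z = F z" and sh: "SHbar al be ga de p q m n eta F"
  shows "SHbar al be ga de p q m n eta G"
proof -
  have i: "inj_on G U = inj_on F U" by (rule inj_on_cong) (simp add: eq)
  show ?thesis using sh unfolding SHbar_def SH_def i by (simp add: eq)
qed

theorem theorem4p2:
  fixes al be ga de p q eta :: real and m n :: nat
    and f :: "nat \<Rightarrow> complex \<Rightarrow> complex" and t :: "nat \<Rightarrow> real"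
  assumes "al > 0" "be > 0" "ga > 0" "de > 0" "p > 0" "q > 0" "q \<le> al + p"
    and "0 \<le> eta" "eta < 1" "m \<ge> 1" "m > n"
    and "\<And>j. SHbar al be ga de p q m n eta (f j)"
    and "\<And>j. t j \<ge> 0" and "t sums 1"
  shows "SHbar al be ga de p q m n eta (\<lambda>z. \<Sum>j. complex_of_real (t j) * f j z)"
proof -
  interpret SHL al be ga de p q eta m n
    using assms by unfold_locales auto
  have "\<forall>j. \<exists>X. good (fst X) (snd X) \<and> (\<forall>z\<in>U. f j z = ps (acoef (fst X)) z + cnj (ps (bcoef (snd X)) z))"
  proof
    fix j
    obtain Ah Bh where "good Ah Bh \<and> (\<forall>z\<in>U. f j z = ps (acoef Ah) z + cnj (ps (bcoef Bh) z))"
      using Nec[OF assms(12)[of j]] by blast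
    then show "\<exists>X. good (fst X) (snd X) \<and> (\<forall>z\<in>U. f j z = ps (acoef (fst X)) z + cnj (ps (bcoef (snd X)) z))"
      by (intro exI[of _ "(Ah, Bh)"]) simp
  qed
  from choice[OF this] obtain X where X: "\<forall>j. good (fst (X j)) (snd (X j)) \<and>
      (\<forall>z\<in>U. f j z = ps (acoef (fst (X j))) z + cnj (ps (bcoef (snd (X j))) z))" by blast
  define Ah where "Ah j = fst (X j)" for j
  define Bh where "Bh j = snd (X j)" for j
  have g: "good (Ah j) (Bh j)" for j using X by (simp add: Ah_def Bh_def)
  have fe: "f j z = ps (acoef (Ah j)) z + cnj (ps (bcoef (Bh j)) z)" if "z \<in> U" for j z
    using X that by (simp add: Ah_def Bh_def)
  have S: "SHbar al be ga de p q m n eta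
      (\<lambda>z. ps (acoef (\<lambda>k. \<Sum>j. t j * Ah j k)) z + cnj (ps (bcoef (\<lambda>k. \<Sum>j. t j * Bh j k)) z))"
    by (rule Suf[OF Conv(1)[OF g assms(13,14)]])
  show ?thesis
  proof (rule SHbar_cong[OF _ S])
    fix z assume z: "z \<in> U"
    have "(\<Sum>j. complex_of_real (t j) * f j z) = (\<Sum>j. complex_of_real (t j) * (ps (acoef (Ah j)) z + cnj (ps (bcoef (Bh j)) z)))"
      using fe[OF z] by simp
    also have "\<dots> = ps (acoef (\<lambda>k. \<Sum>j. t j * Ah j k)) z + cnj (ps (bcoef (\<lambda>k. \<Sum>j. t j * Bh j k)) z)"
      by (rule Conv(2)[OF g assms(13,14) z])
    finally show "(\<Sum>j. complex_of_real (t j) * f j z) =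
      ps (acoef (\<lambda>k. \<Sum>j. t j * Ah j k)) z + cnj (ps (bcoef (\<lambda>k. \<Sum>j. t j * Bh j k)) z)" .
  qed
qed

end
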